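(* (i) For every $s\in\mathbb{R}$ there exists $L_0\ge1$ such that for every $L\ge L_0$ and $z\in\mathbb{Z}^d$, $$\Big\{\max_{x\in Q_{R_L,z}}\Xi_L(x)\ge a^\Xi_L-\frac{s}{a_L}\Big\}\cap\Big\{\max_{x\in Q_{R_L+r_L,z}}\xi_L(x)\le a_L-\theta\Big\}=\emptyset.$$ (ii) For every $z\in\mathbb{Z}^d$, $s\in\mathbb{R}$ and $\chi\in\{\xi,\Xi\}$, $\lim_{L\to\infty}(L/R_L)^d\,\mathbb{P}(\mathcal{A}^\chi_{L,z}(s))=0$. (iii) For every $z\in\mathbb{Z}^d$ and $s\in\mathbb{R}$, $$\lim_{L\to\infty}\Big(\frac{L}{R_L}\Big)^d\mathbb{P}\Big(\max_{x\in Q_{R_L,z}}\Xi_L(x)\ge a^\Xi_L-\frac{s}{a_L};\ w_{L,z}\neq w^\Xi_{L,z}\Big)=0.$$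
   Context: Fix $d\ge1$; $|x|$ Euclidean norm; $Q_a=[-a/2,a/2]^d\cap\mathbb{Z}^d$, $Q_{a,x}=x+Q_a$, $Q_a^{\neq0}=Q_a\setminus\{0\}$; $u_L\ll v_L$ means $u_L/v_L\to0$. For each $L\ge1$, $(\xi_L(x))_{x\in\mathbb{Z}^d}$ is a centred shift-stationary Gaussian field with unit variance and non-negative covariance $v_L$ with (I) $\sup_{|x|\ge\exp(\sqrt{\ln L})}v_L(x)\ln|x|\to0$; (II) there are $\mathfrak c,\mathfrak c'>0$ with $1-e^{\mathfrak c'|x|}/d_L\le v_L(x)\le1-\mathfrak c/d_L$ for all $L,x\ne0$, where $\sup_{|x|=1}v_L(x)=1-1/d_L$. $a_L$: $\mathbb{P}(\xi_L(0)>a_L)=L^{-d}$. Fix $R_L,r_L$ with $a_L\ll\ln R_L\ll a_L^2/d_L$, $\ln a_L\le\ln r_L\ll\sqrt{a_L}$. $\Delta f(x)=\sum_{|y-x|=1}(f(y)-f(x))$. $\mathcal{S}_L(x)=a_L(1-v_L(x))$; $\bar\varphi_L\ge0$ the normalised principal eigenfunction of $\Delta-\mathcal{S}_L$ on $Q_{r_L}$ (Dirichlet). $\zeta_{L,x_0}(x)=\xi_L(x)-\xi_L(x_0)v_L(x-x_0)$; $\Phi_L(y)=\sum_{x\in Q_{r_L}^{\neq0}}\bar\varphi_L(x)^2\zeta_{L,y}(x+y)$; $\tau_L^2=\mathrm{Var}(\Phi_L(y))$; $\Xi_L=\xi_L+\Phi_L$; $a_L^\Xi=a_L\sqrt{1+\tau_L^2}$.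 Standing assumptions: $d_L\ll a_L$, $\tau_L\ll a_L^{-1}(a_L/d_L)^{1/2}$. $\theta=2d+1$. $\Theta^\xi_L(x)=a_L(\xi_L(x)-a_L)$, $\Theta^\Xi_L(x)=a_L(\Xi_L(x)-a^\Xi_L)$. $\mathcal{A}^\chi_{L,z}(s)=\bigcup_{x\ne y\in Q_{R_L,z}}\{\Theta^\chi_L(x)\ge-s,\ \Theta^\chi_L(y)\ge-s\}$. $w_{L,z}$ and $w^\Xi_{L,z}$ are the points of $Q_{R_L,z}$ where $\xi_L$, resp. $\Xi_L$, attains its maximum over $Q_{R_L,z}$. *)

theory Defs
  imports "HOL-Probability.Probability"
begin

text \<open>Points of the lattice Z^d are represented as int ^ 'd, with d = CARD('d).\<close>

definition znorm :: "int ^ 'd \<Rightarrow> real" where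
  "znorm x = sqrt (\<Sum>i\<in>UNIV. (real_of_int (x $ i))^2)"

definition Qbox0 :: "real \<Rightarrow> (int ^ 'd) set" where
  "Qbox0 s = {q. \<forall>i. - s / 2 \<le> real_of_int (q $ i) \<and> real_of_int (q $ i) \<le> s / 2}"

definition Qbox :: "real \<Rightarrow> int ^ 'd \<Rightarrow> (int ^ 'd) set" where
  "Qbox s z = (\<lambda>q. z + q) ` Qbox0 s"

definition lap :: "(int ^ 'd \<Rightarrow> real) \<Rightarrow> int ^ 'd \<Rightarrow> real" where
  "lap f x = (\<Sum>y\<in>{y. znorm (y - x) = 1}. f y - f x)"

text \<open>d_L defined by sup_{|x|=1} v_L(x) = 1 - 1/d_L.\<close>
definition dparam :: "(int ^ 'd \<Rightarrow> real) \<Rightarrow> real" where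
  "dparam w = 1 / (1 - Max {w x | x. znorm x = 1})"

text \<open>Centred Gaussian field with covariance function C: every finite linear
  combination is a centred normal variable (possibly degenerate) with the
  variance prescribed by C, expressed through its characteristic function.\<close>
definition gaussian_field :: "'a measure \<Rightarrow> ('i \<Rightarrow> 'a \<Rightarrow> real) \<Rightarrow> ('i \<Rightarrow> 'i \<Rightarrow> real) \<Rightarrow> bool" where
  "gaussian_field M X C \<longleftrightarrow>
     (\<forall>i. X i \<in> borel_measurable M) \<and>
     (\<forall>S c t. finite S \<longrightarrow>
        char (distr M borel (\<lambda>\<omega>. \<Sum>i\<in>S. c i * X i \<omega>)) t
        = complex_of_real (exp (- (t^2 * (\<Sum>i\<in>S. \<Sum>j\<in>S. c i * c j * C i j)) / 2)))"

definition dirichlet_eigenpair :: "(int ^ 'd \<Rightarrow> real) \<Rightarrow> (int ^ 'd) set \<Rightarrow> (int ^ 'd \<Rightarrow> real) \<Rightarrow> real \<Rightarrow> bool" where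
  "dirichlet_eigenpair V Q \<psi> \<mu> \<longleftrightarrow>
     (\<forall>x. x \<notin> Q \<longrightarrow> \<psi> x = 0) \<and> (\<exists>x. \<psi> x \<noteq> 0) \<and>
     (\<forall>x\<in>Q. lap \<psi> x - V x * \<psi> x = \<mu> * \<psi> x)"

definition principal_eigenfunction :: "(int ^ 'd \<Rightarrow> real) \<Rightarrow> (int ^ 'd) set \<Rightarrow> (int ^ 'd \<Rightarrow> real) \<Rightarrow> bool" where
  "principal_eigenfunction V Q \<phi> \<longleftrightarrow>
     (\<forall>x. 0 \<le> \<phi> x) \<and> (\<Sum>x\<in>Q. (\<phi> x)^2) = 1 \<and>
     (\<exists>lam. dirichlet_eigenpair V Q \<phi> lam \<and> (\<forall>\<psi> \<mu>. dirichlet_eigenpair V Q \<psi> \<mu> \<longrightarrow> \<mu> \<le> lam))"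

definition zeta :: "(int ^ 'd \<Rightarrow> 'a \<Rightarrow> real) \<Rightarrow> (int ^ 'd \<Rightarrow> real) \<Rightarrow> int ^ 'd \<Rightarrow> int ^ 'd \<Rightarrow> 'a \<Rightarrow> real" where
  "zeta \<xi> w x0 x \<omega> = \<xi> x \<omega> - \<xi> x0 \<omega> * w (x - x0)"

definition PhiF :: "(int ^ 'd \<Rightarrow> 'a \<Rightarrow> real) \<Rightarrow> (int ^ 'd \<Rightarrow> real) \<Rightarrow> (int ^ 'd \<Rightarrow> real) \<Rightarrow> real \<Rightarrow> int ^ 'd \<Rightarrow> 'a \<Rightarrow> real" where
  "PhiF \<xi> w \<phi> s y \<omega> = (\<Sum>x\<in>Qbox0 s - {0}. (\<phi> x)^2 * zeta \<xi> w y (x + y) \<omega>)"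

definition XiF :: "(int ^ 'd \<Rightarrow> 'a \<Rightarrow> real) \<Rightarrow> (int ^ 'd \<Rightarrow> real) \<Rightarrow> (int ^ 'd \<Rightarrow> real) \<Rightarrow> real \<Rightarrow> int ^ 'd \<Rightarrow> 'a \<Rightarrow> real" where
  "XiF \<xi> w \<phi> s x \<omega> = \<xi> x \<omega> + PhiF \<xi> w \<phi> s x \<omega>"

definition var :: "'a measure \<Rightarrow> ('a \<Rightarrow> real) \<Rightarrow> real" where
  "var M X = integral\<^sup>L M (\<lambda>\<omega>. (X \<omega> - integral\<^sup>L M X)^2)"

text \<open>tau_L = sqrt(Var(Phi_L(y))), taken at y = 0 (stationarity).\<close>
definition tauF :: "'a measure \<Rightarrow> (int ^ 'd \<Rightarrow> 'a \<Rightarrow> real) \<Rightarrow> (int ^ 'd \<Rightarrow> real) \<Rightarrow> (int ^ 'd \<Rightarrow> real) \<Rightarrow> real \<Rightarrow> real" where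
  "tauF M \<xi> w \<phi> s = sqrt (var M (PhiF \<xi> w \<phi> s 0))"

definition Theta :: "real \<Rightarrow> real \<Rightarrow> (int ^ 'd \<Rightarrow> 'a \<Rightarrow> real) \<Rightarrow> int ^ 'd \<Rightarrow> 'a \<Rightarrow> real" where
  "Theta a c f x \<omega> = a * (f x \<omega> - c)"

definition Aev :: "'a measure \<Rightarrow> (int ^ 'd) set \<Rightarrow> (int ^ 'd \<Rightarrow> 'a \<Rightarrow> real) \<Rightarrow> real \<Rightarrow> 'a set" where
  "Aev M Q \<Theta> s = {\<omega>\<in>space M. \<exists>x\<in>Q. \<exists>y\<in>Q. x \<noteq> y \<and> - s \<le> \<Theta> x \<omega> \<and> - s \<le> \<Theta> y \<omega>}"

end

theory Submission
  imports Defs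
begin

lemma nn_normal_density_1: "(\<integral>\<^sup>+x. ennreal (normal_density \<mu> 1 x) \<partial>lborel) = 1"
  by (subst nn_integral_eq_integral) auto

lemma std_tail:
  assumes x: "0 \<le> x"
  shows "measure std_normal_distribution {x..} \<le> exp (- (x^2) / 2)"
proof -
  have "emeasure std_normal_distribution {x..} = (\<integral>\<^sup>+t. ennreal (std_normal_density t) * indicator {x..} t \<partial>lborel)"
    by (simp add: emeasure_density)
  also have "\<dots> \<le> (\<integral>\<^sup>+t. ennreal (exp (- (x^2) / 2)) * ennreal (normal_density x 1 t) \<partial>lborel)"
  proof (rule nn_integral_mono)
    fix t
    show "ennreal (std_normal_density t) * indicator {x..} t \<le> ennreal (exp (- (x^2) / 2)) * ennreal (normal_density x 1 t)"
    proof (cases "x \<le> t")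
      case True
      have "- (t^2) / 2 \<le> - (x^2)/2 + - ((t - x)^2) / 2"
      proof -
        have "0 \<le> x * (t - x)" using True x by simp
        moreover have "(t - x)^2 = t^2 - 2*t*x + x^2" by (simp add: power2_diff)
        ultimately show ?thesis by (simp add: algebra_simps power2_eq_square)
      qed
      then have "exp (- (t^2) / 2) \<le> exp (- (x^2)/2) * exp (- ((t - x)^2) / 2)"
        by (simp add: exp_add[symmetric])
      then have "std_normal_density t \<le> exp (- (x^2) / 2) * normal_density x 1 t"
        by (simp add: normal_density_def std_normal_density_def divide_right_mono)
      then show ?thesis using True
        by (simp add: ennreal_mult'[symmetric] ennreal_leI)
    qed simp
  qed
  also have "\<dots> = ennreal (exp (- (x^2) / 2))"
    by (simp add: nn_integral_cmult nn_normal_density_1)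
  finally have "emeasure std_normal_distribution {x..} \<le> ennreal (exp (- (x^2) / 2))" .
  then show ?thesis
    by (simp add: measure_def enn2real_leI)
qed

lemma std_lower:
  assumes a: "0 \<le> a"
  shows "std_normal_density (a + 1) \<le> measure std_normal_distribution {a<..}"
proof -
  interpret real_distribution std_normal_distribution by (rule real_dist_normal_dist)
  have "ennreal (std_normal_density (a + 1)) = (\<integral>\<^sup>+t. ennreal (std_normal_density (a + 1)) * indicator {a<..a+1} t \<partial>lborel)"
    by (simp add: nn_integral_cmult_indicator)
  also have "\<dots> \<le> (\<integral>\<^sup>+t. ennreal (std_normal_density t) * indicator {a<..} t \<partial>lborel)"
  proof (rule nn_integral_mono)
    fix t
    show "ennreal (std_normal_density (a + 1)) * indicator {a<..a+1} t \<le> ennreal (std_normal_density t) * indicator {a<..} t"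
    proof (cases "a < t \<and> t \<le> a + 1")
      case True
      then have "t^2 \<le> (a+1)^2" using a by (intro power_mono) auto
      then have "std_normal_density (a + 1) \<le> std_normal_density t"
        by (simp add: std_normal_density_def divide_right_mono)
      then show ?thesis using True by (simp add: ennreal_leI)
    qed (auto simp: indicator_def)
  qed
  also have "\<dots> = emeasure std_normal_distribution {a<..}"
    by (simp add: emeasure_density)
  finally show ?thesis
    by (simp add: emeasure_eq_measure)
qed

lemma char_return0: "char (return borel (0::real)) t = 1"
  unfolding char_def by (subst integral_return) auto

lemma real_distribution_return0: "real_distribution (return borel (0::real))"
  unfolding real_distribution_def real_distribution_axioms_def by (auto intro: prob_space_return)

definition QF :: "('i \<Rightarrow> 'i \<Rightarrow> real) \<Rightarrow> 'k set \<Rightarrow> ('k \<Rightarrow> 'i) \<Rightarrow> ('k \<Rightarrow> real) \<Rightarrow> real" where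
  "QF C I p b = (\<Sum>k\<in>I. \<Sum>l\<in>I. b k * b l * C (p k) (p l))"

lemma group_mult:
  fixes b f :: "_ \<Rightarrow> real"
  assumes I: "finite I"
  shows "(\<Sum>i\<in>p ` I. (\<Sum>k\<in>{k. k \<in> I \<and> p k = i}. b k) * f i) = (\<Sum>k\<in>I. b k * f (p k))"
proof -
  have "(\<Sum>i\<in>p ` I. (\<Sum>k\<in>{k. k \<in> I \<and> p k = i}. b k) * f i)
      = (\<Sum>i\<in>p ` I. \<Sum>k\<in>{k. k \<in> I \<and> p k = i}. b k * f (p k))"
  proof (intro sum.cong refl)
    fix i
    have "(\<Sum>k\<in>{k. k \<in> I \<and> p k = i}. b k) * f i = (\<Sum>k\<in>{k. k \<in> I \<and> p k = i}. b k * f i)"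
      by (rule sum_distrib_right)
    also have "\<dots> = (\<Sum>k\<in>{k. k \<in> I \<and> p k = i}. b k * f (p k))"
      by (intro sum.cong refl) auto
    finally show "(\<Sum>k\<in>{k. k \<in> I \<and> p k = i}. b k) * f i = (\<Sum>k\<in>{k. k \<in> I \<and> p k = i}. b k * f (p k))" .
  qed
  also have "\<dots> = (\<Sum>k\<in>I. b k * f (p k))"
    using I by (intro sum.group) auto
  finally show ?thesis .
qed

lemma le_div_iff_aux: "0 < (c::real) \<Longrightarrow> (y \<le> x) = (y / c \<le> x / c)"
  by (simp add: divide_le_cancel)

lemma sum_aux: "(\<Sum>j\<in>J. (x::real) * y j * z j) = x * (\<Sum>j\<in>J. y j * z j)"
  by (simp add: sum_distrib_left mult.assoc)

lemma lincomb_char: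
  assumes G: "gaussian_field M X C" and I: "finite I"
  shows "char (distr M borel (\<lambda>\<omega>. \<Sum>k\<in>I. b k * X (p k) \<omega>)) t
         = complex_of_real (exp (- (t^2 * QF C I p b) / 2))"
proof -
  let ?c = "\<lambda>i. (\<Sum>k\<in>{k. k \<in> I \<and> p k = i}. b k)"
  have fS: "finite (p ` I)" using I by simp
  have e1: "(\<lambda>\<omega>. \<Sum>i\<in>p ` I. ?c i * X i \<omega>) = (\<lambda>\<omega>. \<Sum>k\<in>I. b k * X (p k) \<omega>)"
    using group_mult[OF I, where p=p and b=b] by simp
  have e2: "(\<Sum>i\<in>p ` I. \<Sum>j\<in>p ` I. ?c i * ?c j * C i j) = QF C I p b"
  proof -
    have "(\<Sum>i\<in>p ` I. \<Sum>j\<in>p ` I. ?c i * ?c j * C i j) = (\<Sum>i\<in>p ` I. ?c i * (\<Sum>j\<in>p ` I. ?c j * C i j))"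
      by (intro sum.cong refl sum_aux)
    also have "\<dots> = (\<Sum>k\<in>I. b k * (\<Sum>j\<in>p ` I. ?c j * C (p k) j))"
      by (rule group_mult[OF I])
    also have "\<dots> = (\<Sum>k\<in>I. b k * (\<Sum>l\<in>I. b l * C (p k) (p l)))"
      using group_mult[OF I, where p=p and b=b] by simp
    also have "\<dots> = QF C I p b"
      unfolding QF_def by (simp add: sum_distrib_left mult.assoc)
    finally show ?thesis .
  qed
  have "char (distr M borel (\<lambda>\<omega>. \<Sum>i\<in>p ` I. ?c i * X i \<omega>)) t
        = complex_of_real (exp (- (t^2 * (\<Sum>i\<in>p ` I. \<Sum>j\<in>p ` I. ?c i * ?c j * C i j)) / 2))"
  proof -
    have gf: "\<forall>S c t. finite S \<longrightarrow> char (distr M borel (\<lambda>\<omega>. \<Sum>i\<in>S. c i * X i \<omega>)) t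
        = complex_of_real (exp (- (t^2 * (\<Sum>i\<in>S. \<Sum>j\<in>S. c i * c j * C i j)) / 2))"
      using G unfolding gaussian_field_def by (elim conjE)
    show ?thesis using gf[rule_format, of "p ` I" ?c t] fS by simp
  qed
  then show ?thesis unfolding e1 e2 .
qed

lemma lincomb_meas:
  assumes G: "gaussian_field M X C"
  shows "(\<lambda>\<omega>. \<Sum>k\<in>I. b k * X (p k) \<omega>) \<in> borel_measurable M"
  using G unfolding gaussian_field_def by (intro borel_measurable_sum borel_measurable_times) auto

locale gfield =
  fixes M :: "'a measure" and X :: "'i \<Rightarrow> 'a \<Rightarrow> real" and C :: "'i \<Rightarrow> 'i \<Rightarrow> real"
  assumes P: "prob_space M" and G: "gaussian_field M X C"
begin

lemma QF_nonneg:
  assumes I: "finite I"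
  shows "0 \<le> QF C I p b"
proof -
  interpret prob_space M by (rule P)
  let ?Y = "\<lambda>\<omega>. \<Sum>k\<in>I. b k * X (p k) \<omega>"
  interpret R: real_distribution "distr M borel ?Y"
    by (rule real_distribution_distr) (rule lincomb_meas[OF G])
  have "norm (char (distr M borel ?Y) 1) \<le> 1" by (rule R.cmod_char_le_1)
  then have "exp (- (QF C I p b) / 2) \<le> 1"
    using lincomb_char[OF G I, of b p 1] by simp
  then show ?thesis by simp
qed

lemma distr_std:
  assumes I: "finite I" and q: "QF C I p b = 1"
  shows "distr M borel (\<lambda>\<omega>. \<Sum>k\<in>I. b k * X (p k) \<omega>) = std_normal_distribution"
proof -
  interpret prob_space M by (rule P)
  show ?thesis
    apply (rule Levy_uniqueness)
      apply (rule real_distribution_distr) apply (rule lincomb_meas[OF G])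
     apply (rule real_dist_normal_dist)
    apply (rule ext)
    apply (simp add: lincomb_char[OF G I] q char_std_normal_distribution)
    done
qed

lemma distr_zero:
  assumes I: "finite I" and q: "QF C I p b = 0"
  shows "distr M borel (\<lambda>\<omega>. \<Sum>k\<in>I. b k * X (p k) \<omega>) = return borel 0"
proof -
  interpret prob_space M by (rule P)
  show ?thesis
    apply (rule Levy_uniqueness)
      apply (rule real_distribution_distr) apply (rule lincomb_meas[OF G])
     apply (rule real_distribution_return0)
    apply (rule ext)
    apply (simp add: lincomb_char[OF G I] q char_return0)
    done
qed

lemma scaled:
  assumes q: "0 < QF C I p b"
  shows "QF C I p (\<lambda>k. b k / sqrt (QF C I p b)) = 1"
proof -
  have "QF C I p (\<lambda>k. b k / sqrt (QF C I p b)) = QF C I p b / (sqrt (QF C I p b))^2"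
    unfolding QF_def by (simp add: sum_divide_distrib power2_eq_square)
  then show ?thesis using q by simp
qed

lemma gtail:
  assumes I: "finite I" and y: "0 \<le> y" and s: "QF C I p b \<le> s2" and s2: "0 < s2"
  shows "measure M {\<omega>\<in>space M. y \<le> (\<Sum>k\<in>I. b k * X (p k) \<omega>)} \<le> exp (- (y^2) / (2 * s2))"
proof -
  interpret prob_space M by (rule P)
  let ?Y = "\<lambda>\<omega>. \<Sum>k\<in>I. b k * X (p k) \<omega>"
  define q where "q = QF C I p b"
  have meas: "?Y \<in> borel_measurable M" by (rule lincomb_meas[OF G])
  have q0: "0 \<le> q" unfolding q_def by (rule QF_nonneg[OF I])
  show ?thesis
  proof (cases "q = 0")
    case True
    show ?thesis
    proof (cases "y = 0")
      case True then show ?thesis by simp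
    next
      case False
      then have "measure M {\<omega>\<in>space M. y \<le> ?Y \<omega>} = measure (distr M borel ?Y) {y..}"
        using meas by (subst measure_distr) (auto intro: arg_cong[where f="measure M"])
      also have "\<dots> = measure (return borel 0) {y..}"
        using distr_zero[OF I] True unfolding q_def by simp
      also have "\<dots> = 0" using False y by (simp add: measure_return)
      finally show ?thesis by simp
    qed
  next
    case False
    then have qp: "0 < q" using q0 by simp
    let ?Z = "\<lambda>\<omega>. \<Sum>k\<in>I. (b k / sqrt q) * X (p k) \<omega>"
    have Zeq: "?Z \<omega> = ?Y \<omega> / sqrt q" for \<omega>
      by (simp add: sum_divide_distrib)
    have "measure M {\<omega>\<in>space M. y \<le> ?Y \<omega>} = measure M {\<omega>\<in>space M. y / sqrt q \<le> ?Z \<omega>}"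
    proof -
      have "y \<le> ?Y \<omega> \<longleftrightarrow> y / sqrt q \<le> ?Z \<omega>" for \<omega>
        unfolding Zeq using qp by (intro le_div_iff_aux) simp
      then have "{\<omega>\<in>space M. y \<le> ?Y \<omega>} = {\<omega>\<in>space M. y / sqrt q \<le> ?Z \<omega>}" by blast
      then show ?thesis by (rule arg_cong)
    qed
    also have "\<dots> = measure (distr M borel ?Z) {y / sqrt q..}"
      using lincomb_meas[OF G, where I=I and b="\<lambda>k. b k / sqrt q" and p=p] by (subst measure_distr) (auto intro: arg_cong[where f="measure M"])
    also have "\<dots> = measure std_normal_distribution {y / sqrt q..}"
      using distr_std[OF I scaled] qp unfolding q_def by simp
    also have "\<dots> \<le> exp (- ((y / sqrt q)^2) / 2)"
      using y qp by (intro std_tail) simp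
    also have "\<dots> = exp (- (y^2) / (2 * q))"
      using qp by (simp add: power_divide)
    also have "\<dots> \<le> exp (- (y^2) / (2 * s2))"
    proof -
      have "y^2 / (2 * s2) \<le> y^2 / (2 * q)"
        using qp s unfolding q_def[symmetric] by (intro divide_left_mono) auto
      then show ?thesis by simp
    qed
    finally show ?thesis .
  qed
qed

lemma glower:
  assumes I: "finite I" and q: "QF C I p b = 1" and a: "0 \<le> a"
  shows "std_normal_density (a + 1) \<le> measure M {\<omega>\<in>space M. a < (\<Sum>k\<in>I. b k * X (p k) \<omega>)}"
proof -
  interpret prob_space M by (rule P)
  let ?Y = "\<lambda>\<omega>. \<Sum>k\<in>I. b k * X (p k) \<omega>"
  have "measure M {\<omega>\<in>space M. a < ?Y \<omega>} = measure (distr M borel ?Y) {a<..}"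
    using lincomb_meas[OF G, where I=I and b=b and p=p] by (subst measure_distr) (auto intro: arg_cong[where f="measure M"])
  also have "\<dots> = measure std_normal_distribution {a<..}"
    using distr_std[OF I q] by simp
  finally show ?thesis using std_lower[OF a] by simp
qed

lemma gvar:
  assumes I: "finite I"
  shows "var M (\<lambda>\<omega>. \<Sum>k\<in>I. b k * X (p k) \<omega>) = QF C I p b"
proof -
  interpret prob_space M by (rule P)
  let ?Y = "\<lambda>\<omega>. \<Sum>k\<in>I. b k * X (p k) \<omega>"
  define q where "q = QF C I p b"
  have q0: "0 \<le> q" unfolding q_def by (rule QF_nonneg[OF I])
  have meas: "?Y \<in> borel_measurable M" by (rule lincomb_meas[OF G])
  show ?thesis
  proof (cases "q = 0")
    case True
    have d: "distr M borel ?Y = return borel 0" using distr_zero[OF I] True unfolding q_def by simp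
    have i1: "integral\<^sup>L M ?Y = 0"
      using integral_distr[OF meas, of "\<lambda>x. x"] d by (simp add: integral_return)
    have "var M ?Y = integral\<^sup>L M (\<lambda>\<omega>. (?Y \<omega>)^2)" unfolding var_def i1 by simp
    also have "\<dots> = integral\<^sup>L (distr M borel ?Y) (\<lambda>x. x^2)"
      using integral_distr[OF meas, of "\<lambda>x. x^2"] by simp
    also have "\<dots> = 0" using d by (simp add: integral_return)
    finally show ?thesis using True unfolding q_def by simp
  next
    case False
    then have qp: "0 < q" using q0 by simp
    let ?Z = "\<lambda>\<omega>. \<Sum>k\<in>I. (b k / sqrt q) * X (p k) \<omega>"
    have Zeq0: "?Z \<omega> = ?Y \<omega> / sqrt q" for \<omega>
      by (simp add: sum_divide_distrib)
    have Zeq: "?Y \<omega> = sqrt q * ?Z \<omega>" for \<omega>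
      unfolding Zeq0 using qp by simp
    have measZ: "?Z \<in> borel_measurable M" by (rule lincomb_meas[OF G])
    have d: "distr M borel ?Z = std_normal_distribution"
      using distr_std[OF I scaled] qp unfolding q_def by simp
    have i1: "integral\<^sup>L M ?Z = 0"
      using integral_distr[OF measZ, of "\<lambda>x. x^1"] d integral_std_normal_distribution_moment_odd[of 1]
      by simp
    have i2: "integral\<^sup>L M (\<lambda>\<omega>. (?Z \<omega>)^2) = 1"
      using integral_distr[OF measZ, of "\<lambda>x. x^(2*1)"] d std_normal_distribution_even_moments(1)[of 1]
      by simp
    have "integral\<^sup>L M ?Y = 0" unfolding Zeq using i1 by simp
    then have "var M ?Y = integral\<^sup>L M (\<lambda>\<omega>. (?Y \<omega>)^2)" unfolding var_def by simp
    also have "\<dots> = integral\<^sup>L M (\<lambda>\<omega>. q * (?Z \<omega>)^2)"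
      unfolding Zeq using qp by (simp add: power_mult_distrib)
    also have "\<dots> = q" using i2 by simp
    finally show ?thesis unfolding q_def .
  qed
qed

end

lemma vec_set_eq:
  "{q::'a^'d. \<forall>i. q$i \<in> A} = vec_lambda ` (PiE UNIV (\<lambda>_. A))"
proof
  show "{q::'a^'d. \<forall>i. q$i \<in> A} \<subseteq> vec_lambda ` (PiE UNIV (\<lambda>_. A))"
  proof
    fix q :: "'a^'d" assume "q \<in> {q. \<forall>i. q$i \<in> A}"
    then have "vec_nth q \<in> PiE UNIV (\<lambda>_. A)" by auto
    then show "q \<in> vec_lambda ` (PiE UNIV (\<lambda>_. A))"
      by (metis image_eqI vec_lambda_eta)
  qed
qed auto

lemma vec_set_card:
  assumes "finite A"
  shows "card {q::'a^'d. \<forall>i. q$i \<in> A} = card A ^ CARD('d)"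
proof -
  have "inj_on vec_lambda (PiE UNIV (\<lambda>_::'d. A))"
    by (auto simp: inj_on_def vec_lambda_inject)
  then have "card (vec_lambda ` (PiE UNIV (\<lambda>_::'d. A))) = card (PiE UNIV (\<lambda>_::'d. A))"
    by (rule card_image)
  also have "\<dots> = card A ^ CARD('d)"
    by (simp add: card_PiE)
  finally show ?thesis by (simp add: vec_set_eq)
qed

lemma vec_set_finite:
  assumes "finite A"
  shows "finite {q::'a^'d. \<forall>i. q$i \<in> A}"
  unfolding vec_set_eq using assms by (intro finite_imageI finite_PiE) auto

lemma Qbox0_sub:
  "Qbox0 s \<subseteq> {q::int^'d. \<forall>i. q$i \<in> {- \<lfloor>s/2\<rfloor>..\<lfloor>s/2\<rfloor>}}"
proof
  fix q :: "int^'d" assume q: "q \<in> Qbox0 s"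
  show "q \<in> {q::int^'d. \<forall>i. q$i \<in> {- \<lfloor>s/2\<rfloor>..\<lfloor>s/2\<rfloor>}}"
  proof (clarify)
    fix i
    have a: "- s / 2 \<le> real_of_int (q $ i)" and b: "real_of_int (q $ i) \<le> s / 2"
      using q unfolding Qbox0_def by auto
    have "q $ i \<le> \<lfloor>s/2\<rfloor>" using b by linarith
    moreover have "- q $ i \<le> \<lfloor>s/2\<rfloor>" using a by linarith
    ultimately show "q $ i \<in> {- \<lfloor>s/2\<rfloor>..\<lfloor>s/2\<rfloor>}" by auto
  qed
qed

lemma finite_Qbox0: "finite (Qbox0 s :: (int^'d) set)"
  by (rule finite_subset[OF Qbox0_sub vec_set_finite]) simp

lemma finite_Qbox: "finite (Qbox s z :: (int^'d) set)"
  unfolding Qbox_def by (intro finite_imageI finite_Qbox0)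

lemma card_Qbox0:
  assumes s: "0 \<le> s"
  shows "real (card (Qbox0 s :: (int^'d) set)) \<le> (s + 1) ^ CARD('d)"
proof -
  let ?m = "\<lfloor>s/2\<rfloor>"
  have "card (Qbox0 s :: (int^'d) set) \<le> card {q::int^'d. \<forall>i. q$i \<in> {- ?m..?m}}"
    by (rule card_mono[OF vec_set_finite Qbox0_sub]) simp
  also have "\<dots> = card {- ?m..?m} ^ CARD('d)" by (rule vec_set_card) simp
  finally have "real (card (Qbox0 s :: (int^'d) set)) \<le> real (card {- ?m..?m}) ^ CARD('d)"
    by (metis of_nat_le_iff of_nat_power)
  also have "\<dots> \<le> (s + 1) ^ CARD('d)"
  proof (rule power_mono)
    have "0 \<le> ?m" using s by simp
    then have "real (card {- ?m..?m}) = 2 * ?m + 1" by simp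
    also have "\<dots> \<le> s + 1" by linarith
    finally show "real (card {- ?m..?m}) \<le> s + 1" .
  qed simp
  finally show ?thesis .
qed

lemma card_Qbox:
  assumes s: "0 \<le> s"
  shows "real (card (Qbox s z :: (int^'d) set)) \<le> (s + 1) ^ CARD('d)"
proof -
  have "card (Qbox s z) \<le> card (Qbox0 s :: (int^'d) set)"
    unfolding Qbox_def by (rule card_image_le[OF finite_Qbox0])
  then show ?thesis using card_Qbox0[OF s, where 'd='d] by linarith
qed

lemma Qbox_mem: "x \<in> Qbox s z \<longleftrightarrow> x - z \<in> Qbox0 s"
  unfolding Qbox_def by (auto simp: image_iff algebra_simps) (metis add.commute diff_add_cancel)

lemma Qbox0_small:
  assumes "s < 1"
  shows "Qbox0 s \<subseteq> {0 :: int^'d}"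
proof
  fix q :: "int^'d" assume q: "q \<in> Qbox0 s"
  have "q $ i = 0" for i
  proof -
    have a: "- s / 2 \<le> real_of_int (q $ i)" and b: "real_of_int (q $ i) \<le> s / 2"
      using q unfolding Qbox0_def by auto
    then show ?thesis using assms by linarith
  qed
  then show "q \<in> {0}" by (simp add: vec_eq_iff)
qed

lemma Qbox_small:
  assumes "s < 1"
  shows "Qbox s z \<subseteq> {z :: int^'d}"
  using Qbox0_small[OF assms] unfolding Qbox_def by auto

lemma Qbox0_zero: "0 \<le> s \<Longrightarrow> (0::int^'d) \<in> Qbox0 s"
  unfolding Qbox0_def by auto

lemma Qbox_add:
  assumes "y \<in> Qbox R z" "w \<in> Qbox0 r"
  shows "y + w \<in> Qbox (R + r) z"
proof -
  have "y - z \<in> Qbox0 R" using assms(1) by (simp add: Qbox_mem)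
  then show ?thesis using assms(2) unfolding Qbox_mem Qbox0_def mem_Collect_eq
  proof (clarify)
    fix i
    have "real_of_int (z $ i) \<le> real_of_int (y $ i) + R / 2 \<and> 2 * real_of_int (y $ i) \<le> R + 2 * real_of_int (z $ i)"
      "- (r / 2) \<le> real_of_int (w $ i) \<and> 2 * real_of_int (w $ i) \<le> r"
      using \<open>y - z \<in> Qbox0 R\<close> assms(2) unfolding Qbox0_def by (auto simp: algebra_simps)
    then show "- (R + r) / 2 \<le> real_of_int ((y + w - z) $ i) \<and> real_of_int ((y + w - z) $ i) \<le> (R + r) / 2"
      by auto
  qed
qed

definition N0 :: "(int^'d) set" where "N0 = {e. znorm e = 1}"

definition uvec :: "'d \<Rightarrow> int \<Rightarrow> int^'d" where "uvec i s = (\<chi> j. if j = i then s else 0)"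

lemma znorm_sq: "(znorm e)^2 = (\<Sum>i\<in>UNIV. (real_of_int (e $ i))^2)"
  unfolding znorm_def by (simp add: sum_nonneg)

lemma N0_iff: "e \<in> N0 \<longleftrightarrow> (\<Sum>i\<in>UNIV. (e $ i)^2) = (1::int)"
proof -
  have "e \<in> N0 \<longleftrightarrow> (\<Sum>i\<in>UNIV. (real_of_int (e $ i))^2) = 1"
    unfolding N0_def znorm_def by (simp add: sum_nonneg)
  also have "\<dots> \<longleftrightarrow> real_of_int (\<Sum>i\<in>UNIV. (e $ i)^2) = 1" by simp
  also have "\<dots> \<longleftrightarrow> (\<Sum>i\<in>UNIV. (e $ i)^2) = (1::int)" by linarith
  finally show ?thesis .
qed

lemma sq_le_sum: "(f i :: int)^2 \<le> (\<Sum>j\<in>(UNIV::'d::finite set). (f j)^2)"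
  by (rule member_le_sum) auto

lemma N0_coord: "e \<in> N0 \<Longrightarrow> e $ i \<in> {-1..1}"
proof -
  assume "e \<in> N0"
  then have "(e $ i)^2 \<le> 1" using sq_le_sum[of "\<lambda>j. e $ j" i] by (simp add: N0_iff)
  then show ?thesis using abs_le_square_iff[of "e $ i" 1] by (auto simp: abs_le_iff)
qed

lemma finite_N0: "finite (N0 :: (int^'d) set)"
  by (rule finite_subset[OF _ vec_set_finite[of "{-1..1::int}"]]) (auto dest: N0_coord)

lemma N0_unit:
  assumes "e \<in> N0"
  shows "\<exists>i s. s \<in> {-1, 1} \<and> e = uvec i s"
proof -
  have S: "(\<Sum>i\<in>UNIV. (e $ i)^2) = (1::int)" using assms by (simp add: N0_iff)
  have "\<exists>i. e $ i \<noteq> 0"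
  proof (rule ccontr)
    assume "\<not> (\<exists>i. e $ i \<noteq> 0)"
    then have "(\<Sum>i\<in>UNIV. (e $ i)^2) = (0::int)" by simp
    then show False using S by simp
  qed
  then obtain i where i: "e $ i \<noteq> 0" by blast
  have split: "(\<Sum>j\<in>UNIV. (e $ j)^2) = (e $ i)^2 + (\<Sum>j\<in>UNIV - {i}. (e $ j)^2)"
    by (simp add: sum.remove)
  have ge1: "(e $ i)^2 \<ge> 1" using i by (simp add: power2_eq_square) (smt (verit) mult_le_cancel_left1 zero_less_mult_iff)
  have nn: "(\<Sum>j\<in>UNIV - {i}. (e $ j)^2) \<ge> (0::int)" by (simp add: sum_nonneg)
  have rest0: "(\<Sum>j\<in>UNIV - {i}. (e $ j)^2) = (0::int)" using S split ge1 nn by linarith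
  have others: "j \<noteq> i \<Longrightarrow> e $ j = 0" for j
  proof -
    assume "j \<noteq> i"
    have "(e $ j)^2 \<le> (\<Sum>j\<in>UNIV - {i}. (e $ j)^2)"
      using \<open>j \<noteq> i\<close> by (intro member_le_sum) auto
    then show "e $ j = 0" using rest0 by simp
  qed
  have "(e $ i)^2 = 1" using S split rest0 by linarith
  then have "e $ i \<in> {-1, 1}" by (auto simp: power2_eq_1_iff)
  moreover have "e = uvec i (e $ i)" unfolding uvec_def vec_eq_iff using others by auto
  ultimately show ?thesis by blast
qed

lemma card_N0: "card (N0 :: (int^'d) set) \<le> 2 * CARD('d)"
proof -
  have "N0 \<subseteq> (\<lambda>(i, s). uvec i s) ` (UNIV \<times> {-1, 1::int})"
    using N0_unit by fastforce
  then have "card (N0 :: (int^'d) set) \<le> card ((\<lambda>(i, s). uvec i s) ` (UNIV \<times> {-1, 1::int}) :: (int^'d) set)"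
    by (intro card_mono finite_imageI) auto
  also have "\<dots> \<le> card (UNIV \<times> {-1, 1::int} :: ('d \<times> int) set)"
    by (rule card_image_le) simp
  also have "\<dots> = 2 * CARD('d)" by (simp add: card_cartesian_product)
  finally show ?thesis .
qed

lemma uvec_N0: "s \<in> {-1, 1} \<Longrightarrow> uvec i s \<in> N0"
proof -
  assume s: "s \<in> {-1, 1}"
  have "(\<Sum>j\<in>UNIV. ((uvec i s) $ j)^2) = (\<Sum>j\<in>UNIV. if j = i then s^2 else 0)"
    unfolding uvec_def by (intro sum.cong) auto
  also have "\<dots> = s^2" by simp
  also have "\<dots> = 1" using s by auto
  finally show ?thesis by (simp add: N0_iff)
qed

lemma neigh_eq: "{y. znorm (y - x) = 1} = (\<lambda>e. x + e) ` N0"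
  unfolding N0_def by (auto simp: image_iff) (metis add.commute diff_add_cancel)

lemma lap_N0: "lap f x = (\<Sum>e\<in>N0. f (x + e) - f x)"
proof -
  have "lap f x = (\<Sum>y\<in>(\<lambda>e. x + e) ` N0. f y - f x)" unfolding lap_def neigh_eq ..
  also have "\<dots> = (\<Sum>e\<in>N0. f (x + e) - f x)"
    by (subst sum.reindex) (auto simp: inj_on_def)
  finally show ?thesis .
qed

lemma Qbox0_shrink:
  assumes "x \<in> Qbox0 r" "\<forall>j. \<bar>y $ j\<bar> \<le> \<bar>x $ j\<bar>"
  shows "y \<in> Qbox0 r"
proof -
  have "- r / 2 \<le> real_of_int (y $ j) \<and> real_of_int (y $ j) \<le> r / 2" for j
  proof -
    have a: "- r / 2 \<le> real_of_int (x $ j)" "real_of_int (x $ j) \<le> r / 2"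
      using assms(1) unfolding Qbox0_def by auto
    have "\<bar>real_of_int (y $ j)\<bar> \<le> \<bar>real_of_int (x $ j)\<bar>" using assms(2) by (simp flip: of_int_abs)
    then show ?thesis using a by linarith
  qed
  then show ?thesis unfolding Qbox0_def by auto
qed

lemma sum_sq_shift_le:
  fixes \<phi> :: "int^'d \<Rightarrow> real"
  assumes out: "\<forall>x. x \<notin> Q \<longrightarrow> \<phi> x = 0" and fQ: "finite Q"
  shows "(\<Sum>x\<in>Q. (\<phi> (x + e))^2) \<le> (\<Sum>x\<in>Q. (\<phi> x)^2)"
proof -
  let ?A = "(\<lambda>x. x + e) ` Q"
  have "(\<Sum>x\<in>Q. (\<phi> (x + e))^2) = (\<Sum>y\<in>?A. (\<phi> y)^2)"
    by (subst sum.reindex) (auto simp: inj_on_def)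
  also have "\<dots> = (\<Sum>y\<in>?A \<inter> Q. (\<phi> y)^2) + (\<Sum>y\<in>?A - Q. (\<phi> y)^2)"
    using fQ by (simp add: sum.Int_Diff)
  also have "(\<Sum>y\<in>?A - Q. (\<phi> y)^2) = 0" using out by simp
  also have "(\<Sum>y\<in>?A \<inter> Q. (\<phi> y)^2) \<le> (\<Sum>y\<in>Q. (\<phi> y)^2)"
    using fQ by (intro sum_mono2) auto
  finally show ?thesis by simp
qed

lemma dirichlet_form_le:
  fixes \<phi> :: "int^'d \<Rightarrow> real"
  assumes out: "\<forall>x. x \<notin> Q \<longrightarrow> \<phi> x = 0" and fQ: "finite Q"
  shows "(\<Sum>x\<in>Q. \<phi> x * lap \<phi> x) \<le> 0"
proof -
  have "(\<Sum>x\<in>Q. \<phi> x * lap \<phi> x) = (\<Sum>x\<in>Q. \<Sum>e\<in>N0. \<phi> x * \<phi> (x + e) - (\<phi> x)^2)"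
    unfolding lap_N0 by (intro sum.cong refl) (simp add: sum_distrib_left algebra_simps power2_eq_square)
  also have "\<dots> = (\<Sum>e\<in>N0. \<Sum>x\<in>Q. \<phi> x * \<phi> (x + e) - (\<phi> x)^2)"
    by (rule sum.swap)
  also have "\<dots> \<le> (\<Sum>e\<in>(N0::(int^'d) set). 0)"
  proof (rule sum_mono)
    fix e :: "int^'d"
    have "(\<Sum>x\<in>Q. \<phi> x * \<phi> (x + e)) \<le> (\<Sum>x\<in>Q. ((\<phi> x)^2 + (\<phi> (x + e))^2) / 2)"
    proof (rule sum_mono)
      fix x
      have "0 \<le> (\<phi> x - \<phi> (x + e))^2" by simp
      then show "\<phi> x * \<phi> (x + e) \<le> ((\<phi> x)^2 + (\<phi> (x + e))^2) / 2"
        by (simp add: power2_diff)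
    qed
    also have "\<dots> = ((\<Sum>x\<in>Q. (\<phi> x)^2) + (\<Sum>x\<in>Q. (\<phi> (x + e))^2)) / 2"
      by (simp add: sum.distrib sum_divide_distrib[symmetric])
    also have "\<dots> \<le> (\<Sum>x\<in>Q. (\<phi> x)^2)"
      using sum_sq_shift_le[OF out fQ, of e] by simp
    finally show "(\<Sum>x\<in>Q. \<phi> x * \<phi> (x + e) - (\<phi> x)^2) \<le> 0"
      by (simp add: sum_subtractf)
  qed
  finally show ?thesis by simp
qed

lemma phi0_pos:
  fixes \<phi> :: "int^'d \<Rightarrow> real"
  assumes r: "0 \<le> r" and nn: "\<forall>x. 0 \<le> \<phi> x" and norm: "(\<Sum>x\<in>Qbox0 r. (\<phi> x)^2) = 1"
    and ep: "dirichlet_eigenpair V (Qbox0 r) \<phi> lam"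
  shows "0 < \<phi> 0"
proof (rule ccontr)
  assume "\<not> 0 < \<phi> 0"
  then have z0: "\<phi> 0 = 0" using nn[rule_format, of 0] by linarith
  let ?Q = "Qbox0 r :: (int^'d) set"
  have eq: "\<forall>x\<in>?Q. lap \<phi> x - V x * \<phi> x = lam * \<phi> x"
    using ep unfolding dirichlet_eigenpair_def by blast
  have key: "\<forall>x. x \<in> ?Q \<longrightarrow> (\<Sum>i\<in>UNIV. nat \<bar>x $ i\<bar>) = k \<longrightarrow> \<phi> x = 0" for k
  proof (induction k)
    case 0
    show ?case
    proof (intro allI impI)
      fix x :: "int^'d" assume "x \<in> ?Q" "(\<Sum>i\<in>UNIV. nat \<bar>x $ i\<bar>) = 0"
      then have "x = 0" by (simp add: vec_eq_iff)
      then show "\<phi> x = 0" using z0 by simp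
    qed
  next
    case (Suc k)
    show ?case
    proof (intro allI impI)
      fix x :: "int^'d" assume xQ: "x \<in> ?Q" and xs: "(\<Sum>i\<in>UNIV. nat \<bar>x $ i\<bar>) = Suc k"
      have "\<exists>i. x $ i \<noteq> 0"
      proof (rule ccontr)
        assume "\<not> (\<exists>i. x $ i \<noteq> 0)"
        then have "(\<Sum>i\<in>UNIV. nat \<bar>x $ i\<bar>) = 0" by simp
        then show False using xs by simp
      qed
      then obtain i where i: "x $ i \<noteq> 0" by blast
      define s where "s = sgn (x $ i)"
      have s1: "s \<in> {-1, 1}" using i unfolding s_def by (auto simp: sgn_if)
      define y where "y = x - uvec i s"
      have yi: "y $ i = x $ i - s" and yj: "j \<noteq> i \<Longrightarrow> y $ j = x $ j" for j
        unfolding y_def uvec_def by auto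
      have absyi: "\<bar>y $ i\<bar> = \<bar>x $ i\<bar> - 1" using i yi unfolding s_def by (auto simp: sgn_if)
      have yQ: "y \<in> ?Q"
      proof (rule Qbox0_shrink[OF xQ], intro allI)
        fix j show "\<bar>y $ j\<bar> \<le> \<bar>x $ j\<bar>" using absyi yj by (cases "j = i") auto
      qed
      have "(\<Sum>j\<in>UNIV. nat \<bar>y $ j\<bar>) = nat \<bar>y $ i\<bar> + (\<Sum>j\<in>UNIV - {i}. nat \<bar>y $ j\<bar>)"
        by (simp add: sum.remove)
      also have "(\<Sum>j\<in>UNIV - {i}. nat \<bar>y $ j\<bar>) = (\<Sum>j\<in>UNIV - {i}. nat \<bar>x $ j\<bar>)"
        using yj by (intro sum.cong) auto
      also have "(\<Sum>j\<in>UNIV. nat \<bar>x $ j\<bar>) = nat \<bar>x $ i\<bar> + (\<Sum>j\<in>UNIV - {i}. nat \<bar>x $ j\<bar>)"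
        by (simp add: sum.remove)
      then have "nat \<bar>y $ i\<bar> + (\<Sum>j\<in>UNIV - {i}. nat \<bar>x $ j\<bar>) = k"
        using xs absyi i by simp
      finally have ys: "(\<Sum>j\<in>UNIV. nat \<bar>y $ j\<bar>) = k" .
      have py: "\<phi> y = 0" using Suc.IH yQ ys by blast
      have "lap \<phi> y - V y * \<phi> y = lam * \<phi> y" using eq yQ by blast
      then have "lap \<phi> y = 0" using py by simp
      then have "(\<Sum>e\<in>N0. \<phi> (y + e)) = 0" unfolding lap_N0 py by simp
      moreover have "(\<Sum>e\<in>N0. \<phi> (y + e)) = 0 \<longleftrightarrow> (\<forall>e\<in>N0. \<phi> (y + e) = 0)"
        by (rule sum_nonneg_eq_0_iff[OF finite_N0]) (use nn in auto)
      ultimately have "\<forall>e\<in>N0. \<phi> (y + e) = 0" by simp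
      moreover have "uvec i s \<in> N0" using uvec_N0[OF s1] .
      ultimately have "\<phi> (y + uvec i s) = 0" by blast
      then show "\<phi> x = 0" unfolding y_def by simp
    qed
  qed
  have "\<forall>x\<in>?Q. \<phi> x = 0" using key by blast
  then have "(\<Sum>x\<in>?Q. (\<phi> x)^2) = 0" by simp
  then show False using norm by simp
qed

lemma eig_bound:
  fixes \<phi> :: "int^'d \<Rightarrow> real"
  assumes r: "0 \<le> r" and nn: "\<forall>x. 0 \<le> \<phi> x" and norm: "(\<Sum>x\<in>Qbox0 r. (\<phi> x)^2) = 1"
    and ep: "dirichlet_eigenpair V (Qbox0 r) \<phi> lam" and V0: "V 0 = 0"
  shows "(\<Sum>x\<in>Qbox0 r. (\<phi> x)^2 * V x) \<le> 2 * real CARD('d)"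
proof -
  let ?Q = "Qbox0 r :: (int^'d) set"
  have out: "\<forall>x. x \<notin> ?Q \<longrightarrow> \<phi> x = 0" and eq: "\<forall>x\<in>?Q. lap \<phi> x - V x * \<phi> x = lam * \<phi> x"
    using ep unfolding dirichlet_eigenpair_def by blast+
  have p0: "0 < \<phi> 0" by (rule phi0_pos[OF r nn norm ep])
  have zQ: "0 \<in> ?Q" using r by (rule Qbox0_zero)
  have "lap \<phi> 0 - V 0 * \<phi> 0 = lam * \<phi> 0" using eq zQ by blast
  then have "lap \<phi> 0 = lam * \<phi> 0" using V0 by simp
  moreover have "lap \<phi> 0 \<ge> - real (card (N0::(int^'d) set)) * \<phi> 0"
  proof -
    have "lap \<phi> 0 = (\<Sum>e\<in>N0. \<phi> (0 + e) - \<phi> 0)" by (rule lap_N0)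
    also have "\<dots> \<ge> (\<Sum>e\<in>(N0::(int^'d) set). - \<phi> 0)"
      using nn by (intro sum_mono) auto
    finally show ?thesis by simp
  qed
  ultimately have "(- real (card (N0::(int^'d) set))) * \<phi> 0 \<le> lam * \<phi> 0" by simp
  then have lam: "lam \<ge> - real (card (N0::(int^'d) set))" using p0 by (rule mult_right_le_imp_le)
  have cN: "real (card (N0::(int^'d) set)) \<le> 2 * real CARD('d)"
    using card_N0[where 'd='d] by linarith
  have "(\<Sum>x\<in>?Q. \<phi> x * (lap \<phi> x - V x * \<phi> x)) = (\<Sum>x\<in>?Q. lam * (\<phi> x)^2)"
    using eq by (intro sum.cong) (auto simp: power2_eq_square)
  also have "\<dots> = lam" using norm by (simp add: sum_distrib_left[symmetric])
  finally have "(\<Sum>x\<in>?Q. \<phi> x * lap \<phi> x) - (\<Sum>x\<in>?Q. (\<phi> x)^2 * V x) = lam"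
    by (simp add: sum_subtractf algebra_simps power2_eq_square)
  moreover have "(\<Sum>x\<in>?Q. \<phi> x * lap \<phi> x) \<le> 0" by (rule dirichlet_form_le[OF out finite_Qbox0])
  ultimately show ?thesis using lam cN by linarith
qed

lemma argmax_prop:
  fixes f :: "'b \<Rightarrow> real"
  assumes "finite S" "S \<noteq> {}"
  shows "arg_max_on f S \<in> S \<and> (\<forall>y\<in>S. f y \<le> f (arg_max_on f S))"
proof -
  have "Max (f ` S) \<in> f ` S" using assms by (intro Max_in) auto
  then obtain k where k: "k \<in> S" "f k = Max (f ` S)" by (metis imageE)
  have kmax: "\<forall>y\<in>S. f y \<le> f k" using k assms by simp
  show ?thesis
    unfolding arg_max_on_def
    by (rule arg_maxI[where P="\<lambda>x. x \<in> S" and x=k]) (use k kmax in \<open>auto simp: not_less\<close>)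
qed

lemma big_vec: "\<exists>x::int^'d. x \<noteq> 0 \<and> K \<le> znorm x"
proof -
  define k where "k = \<lceil>max K 1\<rceil>"
  have k1: "1 \<le> k" unfolding k_def by linarith
  define x where "x = (\<chi> i::'d. k)"
  have "znorm x = sqrt (real CARD('d) * (real_of_int k)^2)"
    unfolding znorm_def x_def by simp
  also have "\<dots> \<ge> sqrt ((real_of_int k)^2)"
    by (rule real_sqrt_le_mono) (simp add: mult_le_cancel_right1)
  finally have "znorm x \<ge> real_of_int k" using k1 by simp
  moreover have "real_of_int k \<ge> K" unfolding k_def by linarith
  moreover have "x \<noteq> 0" using k1 unfolding x_def by (auto simp: vec_eq_iff)
  ultimately show ?thesis by (intro exI[of _ x]) auto
qed

locale setting =
  fixes M :: "'a measure"
    and xi :: "real \<Rightarrow> int ^ 'd \<Rightarrow> 'a \<Rightarrow> real"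
    and v :: "real \<Rightarrow> int ^ 'd \<Rightarrow> real"
    and a R r :: "real \<Rightarrow> real"
    and phi :: "real \<Rightarrow> int ^ 'd \<Rightarrow> real"
    and c c' :: real
  assumes P: "prob_space M"
    and gauss: "\<forall>L\<ge>1. gaussian_field M (xi L) (\<lambda>x y. v L (y - x))"
    and unitvar: "\<forall>L\<ge>1. v L 0 = 1"
    and nonneg: "\<forall>L\<ge>1. \<forall>x. 0 \<le> v L x"
    and condI: "\<forall>\<epsilon>>0. eventually (\<lambda>L. \<forall>x. exp (sqrt (ln L)) \<le> znorm x \<longrightarrow> v L x * ln (znorm x) \<le> \<epsilon>) at_top"
    and cpos: "0 < c" and c'pos: "0 < c'"
    and condII: "\<forall>L\<ge>1. \<forall>x. x \<noteq> 0 \<longrightarrow>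
                   1 - exp (c' * znorm x) / dparam (v L) \<le> v L x \<and> v L x \<le> 1 - c / dparam (v L)"
    and a_def: "\<forall>L>1. measure M {\<omega>\<in>space M. a L < xi L 0 \<omega>} = L powr (- real CARD('d))"
    and R2: "((\<lambda>L. ln (R L) / ((a L)^2 / dparam (v L))) \<longlongrightarrow> 0) at_top"
    and r1: "\<forall>L>1. 0 < r L \<and> (0 < a L \<longrightarrow> ln (a L) \<le> ln (r L))"
    and phibar: "\<forall>L\<ge>1. principal_eigenfunction (\<lambda>x. a L * (1 - v L x)) (Qbox0 (r L)) (phi L)"
    and stand1: "((\<lambda>L. dparam (v L) / a L) \<longlongrightarrow> 0) at_top"
    and stand2: "((\<lambda>L. tauF M (xi L) (v L) (phi L) (r L) / ((1 / a L) * sqrt (a L / dparam (v L)))) \<longlongrightarrow> 0) at_top"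
begin

abbreviation D where "D L \<equiv> dparam (v L)"
abbreviation tau where "tau L \<equiv> tauF M (xi L) (v L) (phi L) (r L)"

lemma gf: "1 \<le> L \<Longrightarrow> gfield M (xi L) (\<lambda>x y. v L (y - x))"
  unfolding gfield_def using P gauss by auto

lemma D_nonneg:
  assumes L: "1 \<le> L" shows "0 \<le> D L"
proof (rule ccontr)
  assume "\<not> 0 \<le> D L"
  then have Dn: "D L < 0" by simp
  obtain x :: "int^'d" where x: "x \<noteq> 0" "c / c' \<le> znorm x" using big_vec by blast
  have "c \<le> c' * znorm x" using x c'pos by (simp add: field_simps)
  also have "\<dots> < exp (c' * znorm x)" using exp_gt_one[of 0] by (smt (verit) exp_ge_add_one_self)
  finally have ce: "c < exp (c' * znorm x)" .
  have "1 - exp (c' * znorm x) / D L \<le> 1 - c / D L" using condII L x by force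
  then have "exp (c' * znorm x) / D L \<ge> c / D L" by simp
  then have "exp (c' * znorm x) \<le> c" using Dn by (simp add: divide_le_cancel)
  then show False using ce by simp
qed

lemma v_le1:
  assumes L: "1 \<le> L" shows "v L x \<le> 1"
proof (cases "x = 0")
  case True then show ?thesis using unitvar L by simp
next
  case False
  then have "v L x \<le> 1 - c / D L" using condII L by blast
  moreover have "0 \<le> c / D L" using D_nonneg[OF L] cpos by simp
  ultimately show ?thesis by simp
qed

lemma D_pos_ev: "eventually (\<lambda>L. 0 < D L) at_top"
proof -
  have "eventually (\<lambda>L. \<forall>x. exp (sqrt (ln L)) \<le> znorm x \<longrightarrow> v L x * ln (znorm x) \<le> 1/2) at_top"
    using condI[rule_format, of "1/2"] by simp
  moreover have "eventually (\<lambda>L::real. 1 \<le> L) at_top" by (rule eventually_ge_at_top)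
  ultimately show ?thesis
  proof eventually_elim
    case (elim L)
    show ?case
    proof (rule ccontr)
      assume "\<not> 0 < D L"
      then have D0: "D L = 0" using D_nonneg[OF elim(2)] by simp
      obtain x :: "int^'d" where x: "x \<noteq> 0" "max (exp (sqrt (ln L))) (exp 1) \<le> znorm x"
        using big_vec by blast
      have v1: "v L x = 1" using condII elim(2) x(1) D0 by force
      have "exp 1 \<le> znorm x" using x by simp
      then have "1 \<le> ln (znorm x)" using exp_gt_zero[of 1] by (metis ln_exp ln_le_cancel_iff not_exp_le_zero order.trans linorder_not_le)
      moreover have "v L x * ln (znorm x) \<le> 1/2" using elim(1) x by simp
      ultimately show False using v1 by simp
    qed
  qed
qed

lemma D_ge_c_ev: "eventually (\<lambda>L. c \<le> D L) at_top"
  using D_pos_ev eventually_ge_at_top[of 1]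
proof eventually_elim
  case (elim L)
  obtain x :: "int^'d" where x: "x \<noteq> 0" using big_vec by blast
  have "0 \<le> v L x" using nonneg elim by simp
  also have "v L x \<le> 1 - c / D L" using condII elim x by blast
  finally have "c / D L \<le> 1" by simp
  then show ?case using elim by (simp add: divide_le_eq)
qed

end

lemma div_lt_aux': "0 < (X::real) \<Longrightarrow> y / X < e \<Longrightarrow> y < e * X"
  by (simp add: pos_divide_less_eq)

lemma div_lt_aux: "0 < (X::real) \<Longrightarrow> y / X < e \<Longrightarrow> y \<le> e * X"
  by (simp add: pos_divide_less_eq)

context setting
begin

lemma xi_meas: "1 \<le> L \<Longrightarrow> xi L x \<in> borel_measurable M"
  using gauss unfolding gaussian_field_def by auto

lemma xi0_sum: "(\<lambda>\<omega>. \<Sum>k\<in>{0::int^'d}. (\<lambda>_. 1::real) k * xi L (id k) \<omega>) = xi L 0"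
  by simp

lemma xi0_QF: "1 \<le> L \<Longrightarrow> QF (\<lambda>x y. v L (y - x)) {0::int^'d} id (\<lambda>_. 1) = 1"
  unfolding QF_def using unitvar by simp

lemma xi0_lower:
  assumes L: "1 \<le> L" and t: "0 \<le> t"
  shows "std_normal_density (t + 1) \<le> measure M {\<omega>\<in>space M. t < xi L 0 \<omega>}"
  using gfield.glower[OF gf[OF L] _ xi0_QF[OF L] t] by simp

lemma a_pos_ev: "eventually (\<lambda>L. 0 < a L) at_top"
proof -
  define p1 where "p1 = std_normal_density 1"
  have p1: "0 < p1" unfolding p1_def by (simp add: normal_density_pos)
  have "eventually (\<lambda>L::real. max 1 (1/p1) < L) at_top" by (rule eventually_gt_at_top)
  then show ?thesis
  proof eventually_elim
    case (elim L)
    then have L1: "1 < L" and Lp: "1 / p1 < L" by auto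
    show ?case
    proof (rule ccontr)
      assume "\<not> 0 < a L"
      interpret prob_space M by (rule P)
      have m: "xi L 0 \<in> borel_measurable M" using xi_meas L1 by simp
      have "p1 \<le> measure M {\<omega>\<in>space M. 0 < xi L 0 \<omega>}"
        using xi0_lower[of L 0] L1 unfolding p1_def by simp
      also have "\<dots> \<le> measure M {\<omega>\<in>space M. a L < xi L 0 \<omega>}"
        using \<open>\<not> 0 < a L\<close> m by (intro finite_measure_mono) auto
      also have "\<dots> = L powr (- real CARD('d))" using a_def L1 by simp
      also have "\<dots> \<le> L powr (-1)"
        using L1 by (intro powr_mono) auto
      also have "\<dots> = 1 / L" using L1 by (simp add: powr_minus_divide)
      finally have "p1 * L \<le> 1" using L1 by (simp add: field_simps)
      moreover have "1 < p1 * L" using Lp p1 by (simp add: field_simps)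
      ultimately show False by simp
    qed
  qed
qed

lemma a_ge_ev: "eventually (\<lambda>L. K \<le> a L) at_top"
proof -
  define K' where "K' = max K 1"
  have K': "0 < K'" "K \<le> K'" unfolding K'_def by auto
  have "eventually (\<lambda>L. D L / a L < c / K') at_top"
    using order_tendstoD(2)[OF stand1, of "c / K'"] cpos K' by simp
  with a_pos_ev D_ge_c_ev show ?thesis
  proof eventually_elim
    case (elim L)
    then have "D L * K' < c * a L" using K' by (simp add: field_simps)
    moreover have "c * K' \<le> D L * K'" using elim K' by simp
    ultimately have "c * K' < c * a L" by simp
    then have "K' < a L" using cpos by simp
    then show ?case using K' by simp
  qed
qed

lemma Y_ge_ev:
  assumes K: "0 < K"
  shows "eventually (\<lambda>L. K \<le> a L / D L) at_top"
proof -
  have "eventually (\<lambda>L. D L / a L < 1 / K) at_top"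
    using order_tendstoD(2)[OF stand1, of "1 / K"] K by simp
  with a_pos_ev D_pos_ev show ?thesis
  proof eventually_elim
    case (elim L)
    then have "D L * K < a L" using K by (simp add: field_simps)
    then show ?case using elim by (simp add: field_simps)
  qed
qed

lemma X_ge_ev: "eventually (\<lambda>L. K \<le> (a L)^2 / D L) at_top"
  using a_ge_ev[of "max K 1"] Y_ge_ev[of 1, OF zero_less_one] D_pos_ev
proof eventually_elim
  case (elim L)
  have "(a L)^2 / D L = a L * (a L / D L)" by (simp add: power2_eq_square)
  also have "\<dots> \<ge> max K 1 * 1" using elim by (intro mult_mono) auto
  finally show ?case by simp
qed

lemma tau_ev: "eventually (\<lambda>L. (tau L)^2 \<le> 1 / (a L * D L)) at_top"
proof -
  have "eventually (\<lambda>L. tau L / ((1 / a L) * sqrt (a L / D L)) < 1) at_top"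
    using order_tendstoD(2)[OF stand2, of 1] by simp
  with a_pos_ev D_pos_ev show ?thesis
  proof eventually_elim
    case (elim L)
    have t0: "0 \<le> tau L" unfolding tauF_def var_def by (intro real_sqrt_ge_zero integral_nonneg) simp
    have pos: "0 < (1 / a L) * sqrt (a L / D L)" using elim by simp
    have "tau L < 1 * ((1 / a L) * sqrt (a L / D L))" by (rule div_lt_aux'[OF pos elim(3)])
    then have "(tau L)^2 \<le> ((1 / a L) * sqrt (a L / D L))^2"
      using t0 by (intro power_mono) auto
    also have "\<dots> = 1 / (a L * D L)" using elim
      by (simp add: power_mult_distrib power2_eq_square field_simps)
    finally show ?case .
  qed
qed

lemma lnR_ev:
  assumes e: "0 < e"
  shows "eventually (\<lambda>L. ln (R L) \<le> e * ((a L)^2 / D L)) at_top"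
proof -
  have "eventually (\<lambda>L. ln (R L) / ((a L)^2 / D L) < e) at_top"
    using order_tendstoD(2)[OF R2 e] by simp
  with a_pos_ev D_pos_ev show ?thesis
  proof eventually_elim
    case (elim L)
    have "0 < (a L)^2 / D L" using elim by simp
    then show ?case using elim(3) div_lt_aux by blast
  qed
qed

lemma Ln_ev: "eventually (\<lambda>L. L ^ CARD('d) \<le> sqrt (2 * pi) * exp ((a L + 1)^2 / 2)) at_top"
  using a_pos_ev eventually_gt_at_top[of "1::real"]
proof eventually_elim
  case (elim L)
  have "std_normal_density (a L + 1) \<le> measure M {\<omega>\<in>space M. a L < xi L 0 \<omega>}"
    using xi0_lower[of L "a L"] elim by simp
  also have "\<dots> = L powr (- real CARD('d))" using a_def elim by simp
  also have "\<dots> = 1 / L ^ CARD('d)" using elim by (simp add: powr_minus_divide powr_realpow)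
  finally have "exp (- ((a L + 1)^2) / 2) / sqrt (2 * pi) \<le> 1 / L ^ CARD('d)"
    by (simp add: std_normal_density_def)
  then have "L ^ CARD('d) * exp (- ((a L + 1)^2) / 2) \<le> sqrt (2 * pi)"
    using elim by (simp add: field_simps)
  then have A: "L ^ CARD('d) * exp (- ((a L + 1)^2) / 2) * exp ((a L + 1)^2 / 2) \<le> sqrt (2 * pi) * exp ((a L + 1)^2 / 2)"
    by (intro mult_right_mono) auto
  have "exp (- ((a L + 1)^2) / 2) * exp ((a L + 1)^2 / 2) = 1"
    by (simp add: exp_add[symmetric])
  then have B: "L ^ CARD('d) * exp (- ((a L + 1)^2) / 2) * exp ((a L + 1)^2 / 2) = L ^ CARD('d)"
    by (simp add: mult.assoc)
  from A show ?case unfolding B .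
qed

end

lemma aux42: "(2 * b)^2 / (2 * (4 - 2 * q)) = (b::real)^2 / (2 - q)"
proof -
  have "(2 * b)^2 / (2 * (4 - 2 * q)) = (4 * b^2) / (4 * (2 - q))"
    by (simp add: power_mult_distrib algebra_simps)
  also have "\<dots> = b^2 / (2 - q)" by (rule nonzero_mult_divide_mult_cancel_left) simp
  finally show ?thesis .
qed

context setting
begin

definition bPhi :: "real \<Rightarrow> int^'d \<Rightarrow> real" where
  "bPhi L k = (if k = 0 then - (\<Sum>w\<in>Qbox0 (r L) - {0}. (phi L w)^2 * v L w) else (phi L k)^2)"

abbreviation qPhi where "qPhi L \<equiv> QF (\<lambda>x y. v L (y - x)) (Qbox0 (r L)) (\<lambda>k. k + 0) (bPhi L)"

lemma Phi_lc:
  assumes r: "0 \<le> r L"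
  shows "PhiF (xi L) (v L) (phi L) (r L) y \<omega> = (\<Sum>k\<in>Qbox0 (r L). bPhi L k * xi L (k + y) \<omega>)"
proof -
  let ?Q = "Qbox0 (r L) :: (int^'d) set"
  have zQ: "0 \<in> ?Q" using r by (rule Qbox0_zero)
  have "(\<Sum>k\<in>?Q. bPhi L k * xi L (k + y) \<omega>) = bPhi L 0 * xi L (0 + y) \<omega> + (\<Sum>k\<in>?Q - {0}. bPhi L k * xi L (k + y) \<omega>)"
    by (rule sum.remove[OF finite_Qbox0 zQ])
  also have "(\<Sum>k\<in>?Q - {0}. bPhi L k * xi L (k + y) \<omega>) = (\<Sum>k\<in>?Q - {0}. (phi L k)^2 * xi L (k + y) \<omega>)"
    unfolding bPhi_def by (intro sum.cong) auto
  also have "bPhi L 0 * xi L (0 + y) \<omega> = - (\<Sum>w\<in>?Q - {0}. (phi L w)^2 * v L w * xi L y \<omega>)"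
    unfolding bPhi_def by (simp add: sum_distrib_right)
  finally have "(\<Sum>k\<in>?Q. bPhi L k * xi L (k + y) \<omega>) = (\<Sum>k\<in>?Q - {0}. (phi L k)^2 * xi L (k + y) \<omega> - (phi L k)^2 * v L k * xi L y \<omega>)"
    by (simp add: sum_subtractf)
  also have "\<dots> = PhiF (xi L) (v L) (phi L) (r L) y \<omega>"
    unfolding PhiF_def zeta_def by (intro sum.cong) (auto simp: algebra_simps)
  finally show ?thesis by simp
qed

lemma Phi_QF: "QF (\<lambda>x y. v L (y - x)) (Qbox0 (r L)) (\<lambda>k. k + y) (bPhi L) = qPhi L"
  unfolding QF_def by simp

lemma tau_sq:
  assumes L: "1 \<le> L" and r: "0 \<le> r L"
  shows "(tau L)^2 = qPhi L"
proof -
  have e: "PhiF (xi L) (v L) (phi L) (r L) 0 = (\<lambda>\<omega>. \<Sum>k\<in>Qbox0 (r L). bPhi L k * xi L (k + 0) \<omega>)"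
    using Phi_lc[OF r] by (intro ext) simp
  have "var M (PhiF (xi L) (v L) (phi L) (r L) 0) = qPhi L"
    unfolding e by (rule gfield.gvar[OF gf[OF L] finite_Qbox0])
  moreover have "0 \<le> qPhi L" by (rule gfield.QF_nonneg[OF gf[OF L] finite_Qbox0])
  ultimately show ?thesis unfolding tauF_def by simp
qed

lemma Phi_tail:
  assumes L: "1 \<le> L" and r: "0 \<le> r L" and eta: "0 \<le> eta" and s: "(tau L)^2 \<le> s2" and s2: "0 < s2"
  shows "measure M {\<omega>\<in>space M. eta \<le> PhiF (xi L) (v L) (phi L) (r L) y \<omega>} \<le> exp (- (eta^2) / (2 * s2))"
proof -
  have "measure M {\<omega>\<in>space M. eta \<le> (\<Sum>k\<in>Qbox0 (r L). bPhi L k * xi L (k + y) \<omega>)} \<le> exp (- (eta^2) / (2 * s2))"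
    by (rule gfield.gtail[OF gf[OF L] finite_Qbox0 eta _ s2]) (use s tau_sq[OF L r] Phi_QF in simp)
  then show ?thesis using Phi_lc[OF r] by simp
qed

lemma pair_tail:
  assumes L: "1 \<le> L" and xy: "x \<noteq> y" and b: "0 \<le> b" and cD: "c \<le> D L"
  shows "measure M {\<omega>\<in>space M. 2 * b \<le> xi L x \<omega> + xi L y \<omega>} \<le> exp (- (b^2) / (2 - c / D L))"
proof -
  have Dp: "0 < D L" using cD cpos by simp
  have q1: "c / D L \<le> 1" using cD Dp by simp
  have q0: "0 < c / D L" using cpos Dp by simp
  define s2 where "s2 = 4 - 2 * (c / D L)"
  have s2p: "0 < s2" unfolding s2_def using q1 by simp
  have QFv: "QF (\<lambda>x y. v L (y - x)) {x, y} (\<lambda>k. k) (\<lambda>_. 1) = 2 + v L (y - x) + v L (x - y)"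
    unfolding QF_def using xy unitvar L by simp
  have vyx: "v L (y - x) \<le> 1 - c / D L" using condII L xy by force
  have vxy: "v L (x - y) \<le> 1 - c / D L" using condII L xy by force
  have "measure M {\<omega>\<in>space M. 2 * b \<le> (\<Sum>k\<in>{x, y}. (\<lambda>_. 1::real) k * xi L ((\<lambda>k. k) k) \<omega>)} \<le> exp (- ((2 * b)^2) / (2 * s2))"
    by (rule gfield.gtail[OF gf[OF L] _ _ _ s2p]) (use b QFv vyx vxy in \<open>auto simp: s2_def\<close>)
  moreover have "exp (- ((2 * b)^2) / (2 * s2)) = exp (- (b^2) / (2 - c / D L))"
    unfolding s2_def using aux42[of b "c / D L"] by simp
  ultimately show ?thesis using xy by simp
qed

end

context setting
begin

lemma eig_L:
  assumes L: "1 < L"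
  shows "(\<Sum>w\<in>Qbox0 (r L) - {0}. (phi L w)^2 * (1 - v L w)) * a L \<le> 2 * real CARD('d)"
    and "0 \<le> (\<Sum>w\<in>Qbox0 (r L) - {0}. (phi L w)^2 * (1 - v L w))"
    and "(\<Sum>w\<in>Qbox0 (r L) - {0}. (phi L w)^2) \<le> 1"
    and "\<forall>x. 0 \<le> phi L x"
proof -
  let ?Q = "Qbox0 (r L) :: (int^'d) set"
  have r: "0 \<le> r L" using r1 L by (simp add: less_imp_le)
  have pe: "principal_eigenfunction (\<lambda>x. a L * (1 - v L x)) ?Q (phi L)" using phibar L by simp
  then obtain lam where nn: "\<forall>x. 0 \<le> phi L x" and nm: "(\<Sum>x\<in>?Q. (phi L x)^2) = 1"
    and ep: "dirichlet_eigenpair (\<lambda>x. a L * (1 - v L x)) ?Q (phi L) lam"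
    unfolding principal_eigenfunction_def by blast
  have V0: "(\<lambda>x. a L * (1 - v L x)) 0 = 0" using unitvar L by simp
  have eb: "(\<Sum>x\<in>?Q. (phi L x)^2 * (a L * (1 - v L x))) \<le> 2 * real CARD('d)"
    by (rule eig_bound[OF r nn nm ep V0])
  have zQ: "0 \<in> ?Q" using r by (rule Qbox0_zero)
  have "(\<Sum>x\<in>?Q. (phi L x)^2 * (a L * (1 - v L x))) = (\<Sum>x\<in>?Q. (phi L x)^2 * (1 - v L x)) * a L"
  proof -
    have "(\<Sum>x\<in>?Q. (phi L x)^2 * (a L * (1 - v L x))) = (\<Sum>x\<in>?Q. ((phi L x)^2 * (1 - v L x)) * a L)"
      by (intro sum.cong refl) (simp add: algebra_simps)
    also have "\<dots> = (\<Sum>x\<in>?Q. (phi L x)^2 * (1 - v L x)) * a L"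
      by (rule sum_distrib_right[symmetric])
    finally show ?thesis .
  qed
  also have "(\<Sum>x\<in>?Q. (phi L x)^2 * (1 - v L x)) = (phi L 0)^2 * (1 - v L 0) + (\<Sum>x\<in>?Q - {0}. (phi L x)^2 * (1 - v L x))"
    by (rule sum.remove[OF finite_Qbox0 zQ])
  also have "(phi L 0)^2 * (1 - v L 0) = 0" using unitvar L by simp
  finally show "(\<Sum>w\<in>?Q - {0}. (phi L w)^2 * (1 - v L w)) * a L \<le> 2 * real CARD('d)" using eb by simp
  show "0 \<le> (\<Sum>w\<in>?Q - {0}. (phi L w)^2 * (1 - v L w))"
    using v_le1 L by (intro sum_nonneg mult_nonneg_nonneg) auto
  have "(\<Sum>w\<in>?Q - {0}. (phi L w)^2) \<le> (\<Sum>w\<in>?Q. (phi L w)^2)"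
    by (intro sum_mono2 finite_Qbox0) auto
  then show "(\<Sum>w\<in>?Q - {0}. (phi L w)^2) \<le> 1" using nm by simp
  show "\<forall>x. 0 \<le> phi L x" by (rule nn)
qed

end

context setting
begin

lemma Xi_le:
  assumes L: "1 < L" and a: "0 < a L" and th: "2 * real CARD('d) + 1 \<le> a L"
    and m: "\<forall>w\<in>Qbox0 (r L). xi L (w + y) \<omega> \<le> m" and mt: "m \<le> a L - (2 * real CARD('d) + 1)"
  shows "XiF (xi L) (v L) (phi L) (r L) y \<omega> \<le> a L - 1"
proof -
  let ?Q = "Qbox0 (r L) :: (int^'d) set"
  let ?W = "?Q - {0}"
  have r: "0 \<le> r L" using r1 L by (simp add: less_imp_le)
  have zQ: "0 \<in> ?Q" using r by (rule Qbox0_zero)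
  note e = eig_L[OF L]
  define S1 where "S1 = (\<Sum>w\<in>?W. (phi L w)^2 * v L w)"
  define B where "B = (\<Sum>w\<in>?W. (phi L w)^2)"
  define S2 where "S2 = (\<Sum>w\<in>?W. (phi L w)^2 * xi L (w + y) \<omega>)"
  have BS: "B - S1 = (\<Sum>w\<in>?W. (phi L w)^2 * (1 - v L w))"
    unfolding B_def S1_def by (simp add: sum_subtractf algebra_simps)
  have S1B: "S1 \<le> B" using BS e(2) by simp
  have B1: "B \<le> 1" unfolding B_def using e(3) .
  have y0: "xi L y \<omega> \<le> m" using m zQ by force
  have Xi: "XiF (xi L) (v L) (phi L) (r L) y \<omega> = xi L y \<omega> * (1 - S1) + S2"
  proof -
    have "PhiF (xi L) (v L) (phi L) (r L) y \<omega> = (\<Sum>w\<in>?W. (phi L w)^2 * xi L (w + y) \<omega> - (phi L w)^2 * v L w * xi L y \<omega>)"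
      unfolding PhiF_def zeta_def by (intro sum.cong refl) (simp add: right_diff_distrib)
    also have "\<dots> = S2 - (\<Sum>w\<in>?W. (phi L w)^2 * v L w) * xi L y \<omega>"
      unfolding S2_def by (simp add: sum_subtractf sum_distrib_right)
    finally have "PhiF (xi L) (v L) (phi L) (r L) y \<omega> = S2 - S1 * xi L y \<omega>" unfolding S1_def .
    then show ?thesis unfolding XiF_def by (simp add: right_diff_distrib)
  qed
  have "S2 \<le> (\<Sum>w\<in>?W. (phi L w)^2 * m)"
    unfolding S2_def using m by (intro sum_mono mult_left_mono) auto
  also have "\<dots> = m * B" unfolding B_def by (simp add: sum_distrib_left algebra_simps)
  finally have S2m: "S2 \<le> m * B" .
  have "xi L y \<omega> * (1 - S1) \<le> m * (1 - S1)"
    using y0 S1B B1 by (intro mult_right_mono) auto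
  then have "XiF (xi L) (v L) (phi L) (r L) y \<omega> \<le> m * (1 + (B - S1))"
    using Xi S2m by (simp add: algebra_simps)
  also have "\<dots> \<le> (a L - (2 * real CARD('d) + 1)) * (1 + (B - S1))"
    using mt S1B by (intro mult_right_mono) auto
  also have "\<dots> \<le> (a L - (2 * real CARD('d) + 1)) * (1 + 2 * real CARD('d) / a L)"
  proof (intro mult_left_mono)
    have "(B - S1) * a L \<le> 2 * real CARD('d)" using BS e(1) by simp
    then show "1 + (B - S1) \<le> 1 + 2 * real CARD('d) / a L" using a by (simp add: field_simps)
  qed (use th in simp)
  also have "\<dots> = a L - 1 - (2 * real CARD('d) + 1) * (2 * real CARD('d)) / a L"
    using a by (simp add: field_simps)
  also have "\<dots> \<le> a L - 1" using a by simp
  finally show ?thesis .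
qed

end

context setting
begin

lemma part1_L:
  assumes L: "1 < L" and a: "0 < a L" and th: "2 * real CARD('d) + 1 \<le> a L" and s: "s < a L"
    and mx: "Max ({}::real set) < a L - s / a L"
  shows "{\<omega>\<in>space M.
          a L * sqrt (1 + (tau L)^2) - s / a L
            \<le> Max ((\<lambda>x. XiF (xi L) (v L) (phi L) (r L) x \<omega>) ` Qbox (R L) z)
        \<and> Max ((\<lambda>x. xi L x \<omega>) ` Qbox (R L + r L) z) \<le> a L - (2 * real CARD('d) + 1)} = {}"
proof -
  let ?u = "a L * sqrt (1 + (tau L)^2) - s / a L"
  have ua: "a L - s / a L \<le> ?u"
  proof -
    have "a L * 1 \<le> a L * sqrt (1 + (tau L)^2)" using a by (intro mult_left_mono) auto
    then show ?thesis by simp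
  qed
  have sa: "s / a L < 1" using s a by simp
  have *: "False" if w: "\<omega> \<in> space M" and u: "?u \<le> Max ((\<lambda>x. XiF (xi L) (v L) (phi L) (r L) x \<omega>) ` Qbox (R L) z)"
      and mm: "Max ((\<lambda>x. xi L x \<omega>) ` Qbox (R L + r L) z) \<le> a L - (2 * real CARD('d) + 1)" for \<omega>
    proof (cases "Qbox (R L) z = {}")
      case True
      then show False using u ua mx by simp
    next
      case False
      let ?f = "\<lambda>x. XiF (xi L) (v L) (phi L) (r L) x \<omega>"
      have "Max (?f ` Qbox (R L) z) \<in> ?f ` Qbox (R L) z"
        by (intro Max_in finite_imageI finite_Qbox) (use False in simp)
      then obtain y where y1: "y \<in> Qbox (R L) z" and y2: "Max (?f ` Qbox (R L) z) = ?f y" by (rule imageE)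
      note y = y1 y2[symmetric]
      let ?m = "Max ((\<lambda>x. xi L x \<omega>) ` Qbox (R L + r L) z)"
      have "\<forall>w\<in>Qbox0 (r L). xi L (w + y) \<omega> \<le> ?m"
      proof
        fix w :: "int^'d" assume "w \<in> Qbox0 (r L)"
        then have "y + w \<in> Qbox (R L + r L) z" using Qbox_add y(1) by blast
        then have "xi L (y + w) \<omega> \<le> ?m" by (intro Max_ge finite_imageI finite_Qbox imageI)
        then show "xi L (w + y) \<omega> \<le> ?m" by (simp only: add.commute[of w y])
      qed
      then have "?f y \<le> a L - 1" by (rule Xi_le[OF L a th _ mm])
      moreover have "?u \<le> ?f y" using u y(2) by simp
      ultimately show False using ua sa by linarith
    qed
  show ?thesis
  proof (rule equals0I)
    fix \<omega> assume "\<omega> \<in> {\<omega>\<in>space M. ?u \<le> Max ((\<lambda>x. XiF (xi L) (v L) (phi L) (r L) x \<omega>) ` Qbox (R L) z)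
        \<and> Max ((\<lambda>x. xi L x \<omega>) ` Qbox (R L + r L) z) \<le> a L - (2 * real CARD('d) + 1)}"
    then show False using * by blast
  qed
qed

end

lemma pair_exp:
  fixes a D c b beta nl :: real
  assumes a: "0 < a" and cD: "c \<le> D" and c: "0 < c" and b: "b = a - beta" and ba: "a / 2 \<le> b"
    and h1: "a * beta \<le> c * (a^2 / D) / 128" and h2: "a \<le> c * (a^2 / D) / 128"
    and h3: "1 / 2 \<le> c * (a^2 / D) / 128" and h4: "nl \<le> c * (a^2 / D) / 128"
  shows "(a + 1)^2 / 2 + nl - b^2 / (2 - c / D) \<le> - (c * (a^2 / D) / 32)"
proof -
  define q where "q = c / D"
  have D: "0 < D" using cD c by simp
  have q0: "0 < q" and q1: "q \<le> 1" unfolding q_def using c D cD by auto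
  have cX: "c * (a^2 / D) = a^2 * q" unfolding q_def by (simp add: field_simps)
  have k1: "b^2 / 2 + b^2 * q / 4 \<le> b^2 / (2 - q)"
  proof -
    have "(b^2 / 2 + b^2 * q / 4) * (2 - q) = b^2 - b^2 * q^2 / 4"
      by (simp add: field_simps power2_eq_square)
    also have "\<dots> \<le> b^2" by simp
    finally show ?thesis using q1 by (simp add: le_divide_eq)
  qed
  have k2: "a^2 - 2 * a * beta \<le> b^2" unfolding b by (simp add: power2_diff)
  have k3: "a^2 / 4 \<le> b^2"
  proof -
    have "(a/2)^2 \<le> b^2" using ba a by (intro power_mono) auto
    then show ?thesis by (simp add: power_divide)
  qed
  have k4: "a^2 * q / 16 \<le> b^2 * q / 4" using k3 q0 by (simp add: mult_right_mono divide_right_mono)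
  have k5: "(a + 1)^2 / 2 = a^2 / 2 + a + 1/2" by (simp add: power2_eq_square algebra_simps)
  show ?thesis
    unfolding q_def[symmetric] cX using k1 k2 k4 k5 h1 h2 h3 h4 unfolding cX by linarith
qed

lemma lin_aux: "P \<le> A \<Longrightarrow> 3 * A \<le> B \<Longrightarrow> X \<le> A \<Longrightarrow> 0 \<le> A \<Longrightarrow> nl \<le> X / 128 \<Longrightarrow> P + nl - B \<le> - (X / 32)"
  for P A B X nl :: real by linarith

lemma phi_exp:
  fixes a D c nl :: real
  assumes a: "3 \<le> a" and cD: "c \<le> D" and c: "0 < c" and Y: "393216 / c^2 \<le> a / D"
    and h4: "nl \<le> c * (a^2 / D) / 128"
  shows "(a + 1)^2 / 2 + nl - ((c / 256) * (a / D))^2 * (a * D) / 2 \<le> - (c * (a^2 / D) / 32)"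
proof -
  have D: "0 < D" using cD c by simp
  have e: "((c / 256) * (a / D))^2 * (a * D) / 2 = (c^2 / 131072) * a^2 * (a / D)"
    using D by (simp add: power2_eq_square field_simps)
  have "3 * a^2 = (c^2 / 131072) * a^2 * (393216 / c^2)" using c by (simp add: field_simps)
  also have "\<dots> \<le> (c^2 / 131072) * a^2 * (a / D)"
    using Y c by (intro mult_left_mono) auto
  also have "\<dots> = ((c / 256) * (a / D))^2 * (a * D) / 2" by (rule e[symmetric])
  finally have big: "3 * a^2 \<le> ((c / 256) * (a / D))^2 * (a * D) / 2" .
  have s1: "(a + 1)^2 / 2 \<le> a^2"
  proof -
    have "3 * a \<le> a * a" using a by (intro mult_right_mono) auto
    then have "2 * a + 1 \<le> a * a" using a by linarith
    then show ?thesis by (simp add: power2_eq_square algebra_simps)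
  qed
  have cX: "c * (a^2 / D) \<le> a^2"
  proof -
    have "c * (a^2 / D) = (c / D) * a^2" by simp
    also have "\<dots> \<le> 1 * a^2" using cD D by (intro mult_right_mono) auto
    finally show ?thesis by simp
  qed
  have "0 \<le> a^2" by simp
  then show ?thesis using lin_aux[OF s1 big cX _ h4] by simp
qed

lemma Rn_exp: "0 < (x::real) \<Longrightarrow> x ^ n = exp (real n * ln x)"
  by (simp add: powr_realpow[symmetric] powr_def)

context setting
begin

lemma Phi_meas:
  assumes L: "1 \<le> L" and r: "0 \<le> r L"
  shows "(\<lambda>\<omega>. PhiF (xi L) (v L) (phi L) (r L) y \<omega>) \<in> borel_measurable M"
proof -
  have "(\<lambda>\<omega>. \<Sum>k\<in>Qbox0 (r L). bPhi L k * xi L (k + y) \<omega>) \<in> borel_measurable M"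
    by (rule lincomb_meas[where C="\<lambda>x y. v L (y - x)"]) (use gauss L in simp)
  then show ?thesis using Phi_lc[OF r] by simp
qed

lemma meas_le_sub:
  assumes "E \<subseteq> U" "U \<in> sets M"
  shows "measure M E \<le> measure M U"
proof -
  interpret prob_space M by (rule P)
  show ?thesis
  proof (cases "E \<in> sets M")
    case True then show ?thesis using assms by (intro finite_measure_mono) auto
  next
    case False then show ?thesis by (simp add: measure_notin_sets)
  qed
qed

lemma main_bound:
  fixes E :: "'a set" and b eta G :: real
  assumes L: "1 < L" and R1: "1 \<le> R L" and a: "0 < a L" and cD: "c \<le> D L"
    and b: "0 \<le> b" and eta: "0 \<le> eta" and tau: "(tau L)^2 \<le> 1 / (a L * D L)"
    and Ln: "L ^ CARD('d) \<le> sqrt (2 * pi) * exp ((a L + 1)^2 / 2)"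
    and pe: "(a L + 1)^2 / 2 + real CARD('d) * ln (R L) - b^2 / (2 - c / D L) \<le> - G"
    and qe: "(a L + 1)^2 / 2 + real CARD('d) * ln (R L) - eta^2 * (a L * D L) / 2 \<le> - G"
    and E: "E \<subseteq> (\<Union>p\<in>{p\<in>Qbox (R L) z \<times> Qbox (R L) z. fst p \<noteq> snd p}. {\<omega>\<in>space M. 2 * b \<le> xi L (fst p) \<omega> + xi L (snd p) \<omega>})
               \<union> (\<Union>y\<in>Qbox (R L) z. {\<omega>\<in>space M. eta \<le> PhiF (xi L) (v L) (phi L) (r L) y \<omega>})"
  shows "(L / R L) ^ CARD('d) * measure M E \<le> 2 * 4 ^ CARD('d) * sqrt (2 * pi) * exp (- G)"
proof -
  interpret prob_space M by (rule P)
  let ?Q = "Qbox (R L) z :: (int^'d) set"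
  let ?P = "{p\<in>?Q \<times> ?Q. fst p \<noteq> snd p}"
  let ?n = "CARD('d)"
  define e1 where "e1 = exp (- (b^2) / (2 - c / D L))"
  define e2 where "e2 = exp (- (eta^2) * (a L * D L) / 2)"
  define cQ where "cQ = real (card ?Q)"
  define U1 where "U1 = (\<Union>p\<in>?P. {\<omega>\<in>space M. 2 * b \<le> xi L (fst p) \<omega> + xi L (snd p) \<omega>})"
  define U2 where "U2 = (\<Union>y\<in>?Q. {\<omega>\<in>space M. eta \<le> PhiF (xi L) (v L) (phi L) (r L) y \<omega>})"
  have L1: "1 \<le> L" using L by simp
  have r: "0 \<le> r L" using r1 L by (simp add: less_imp_le)
  have Dp: "0 < D L" using cD cpos by simp
  have fQ: "finite ?Q" by (rule finite_Qbox)
  have fP: "finite ?P" using fQ by simp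
  have xm: "\<And>x. xi L x \<in> borel_measurable M" using xi_meas L1 by simp
  have s1: "\<And>p. {\<omega>\<in>space M. 2 * b \<le> xi L (fst p) \<omega> + xi L (snd p) \<omega>} \<in> sets M"
    using xm by measurable
  have s2: "\<And>y. {\<omega>\<in>space M. eta \<le> PhiF (xi L) (v L) (phi L) (r L) y \<omega>} \<in> sets M"
    using Phi_meas[OF L1 r] by measurable
  have U1s: "U1 \<in> sets M" unfolding U1_def using s1 fP by (intro sets.finite_UN) auto
  have U2s: "U2 \<in> sets M" unfolding U2_def using s2 fQ by (intro sets.finite_UN) auto
  have "measure M U1 \<le> (\<Sum>p\<in>?P. measure M {\<omega>\<in>space M. 2 * b \<le> xi L (fst p) \<omega> + xi L (snd p) \<omega>})"
    unfolding U1_def by (rule measure_UNION_le[OF fP s1])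
  also have "\<dots> \<le> (\<Sum>p\<in>?P. e1)"
  proof (rule sum_mono)
    fix p assume "p \<in> ?P"
    then have "fst p \<noteq> snd p" by auto
    then show "measure M {\<omega>\<in>space M. 2 * b \<le> xi L (fst p) \<omega> + xi L (snd p) \<omega>} \<le> e1"
      unfolding e1_def by (rule pair_tail[OF L1 _ b cD])
  qed
  also have "\<dots> = real (card ?P) * e1" by simp
  also have "\<dots> \<le> cQ * cQ * e1"
  proof -
    have "card ?P \<le> card (?Q \<times> ?Q)" by (intro card_mono) (use fQ in auto)
    also have "\<dots> = card ?Q * card ?Q" by (rule card_cartesian_product)
    finally have "real (card ?P) \<le> real (card ?Q * card ?Q)" by (simp only: of_nat_le_iff)
    then have "real (card ?P) \<le> cQ * cQ" unfolding cQ_def by simp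
    then show ?thesis unfolding e1_def by (intro mult_right_mono) auto
  qed
  finally have m1: "measure M U1 \<le> cQ * cQ * e1" .
  have "measure M U2 \<le> (\<Sum>y\<in>?Q. measure M {\<omega>\<in>space M. eta \<le> PhiF (xi L) (v L) (phi L) (r L) y \<omega>})"
    unfolding U2_def by (rule measure_UNION_le[OF fQ s2])
  also have "\<dots> \<le> (\<Sum>y\<in>?Q. e2)"
  proof (rule sum_mono)
    fix y
    have "measure M {\<omega>\<in>space M. eta \<le> PhiF (xi L) (v L) (phi L) (r L) y \<omega>} \<le> exp (- (eta^2) / (2 * (1 / (a L * D L))))"
      by (rule Phi_tail[OF L1 r eta tau]) (use a Dp in simp)
    also have "\<dots> = e2" unfolding e2_def by simp
    finally show "measure M {\<omega>\<in>space M. eta \<le> PhiF (xi L) (v L) (phi L) (r L) y \<omega>} \<le> e2" .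
  qed
  also have "\<dots> = cQ * e2" unfolding cQ_def by simp
  also have "\<dots> \<le> cQ * cQ * e2"
  proof -
    have "cQ \<le> cQ * cQ" unfolding cQ_def by (cases "card ?Q") auto
    then show ?thesis unfolding e2_def by (intro mult_right_mono) auto
  qed
  finally have m2: "measure M U2 \<le> cQ * cQ * e2" .
  have "measure M E \<le> measure M (U1 \<union> U2)"
    using E U1s U2s unfolding U1_def U2_def by (intro meas_le_sub) auto
  also have "\<dots> \<le> measure M U1 + measure M U2" by (rule measure_Un_le[OF U1s U2s])
  finally have mE: "measure M E \<le> cQ * cQ * (e1 + e2)" using m1 m2 by (simp add: algebra_simps)
  have Rp: "0 < R L" using R1 by simp
  have cQb: "cQ \<le> (2 * R L) ^ ?n"
  proof -
    have "cQ \<le> (R L + 1) ^ ?n" unfolding cQ_def by (rule card_Qbox) (use R1 in simp)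
    also have "\<dots> \<le> (2 * R L) ^ ?n" by (rule power_mono) (use R1 in auto)
    finally show ?thesis .
  qed
  have cQ0: "0 \<le> cQ" unfolding cQ_def by simp
  have K0: "0 \<le> (L / R L) ^ ?n" using L Rp by simp
  have "(L / R L) ^ ?n * (cQ * cQ) \<le> (L / R L) ^ ?n * ((2 * R L) ^ ?n * (2 * R L) ^ ?n)"
    using cQb cQ0 K0 by (intro mult_left_mono mult_mono) auto
  also have "\<dots> = 4 ^ ?n * L ^ ?n * R L ^ ?n"
    using Rp by (simp add: power_divide power_mult_distrib field_simps flip: power_add)
      (simp add: power_mult_distrib[symmetric] mult_2_right power_add)
  also have "\<dots> \<le> 4 ^ ?n * (sqrt (2 * pi) * exp ((a L + 1)^2 / 2)) * exp (real ?n * ln (R L))"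
    using Ln Rp by (simp add: Rn_exp)
  finally have Kb: "(L / R L) ^ ?n * (cQ * cQ) \<le> 4 ^ ?n * sqrt (2 * pi) * (exp ((a L + 1)^2 / 2) * exp (real ?n * ln (R L)))"
    by (simp add: mult.assoc)
  have ee: "0 \<le> e1 + e2" unfolding e1_def e2_def by (intro add_nonneg_nonneg) auto
  have "(L / R L) ^ ?n * measure M E \<le> (L / R L) ^ ?n * (cQ * cQ * (e1 + e2))"
    using mE K0 by (intro mult_left_mono) auto
  also have "\<dots> = ((L / R L) ^ ?n * (cQ * cQ)) * (e1 + e2)" by (simp add: mult.assoc)
  also have "\<dots> \<le> (4 ^ ?n * sqrt (2 * pi) * (exp ((a L + 1)^2 / 2) * exp (real ?n * ln (R L)))) * (e1 + e2)"
    using Kb ee by (intro mult_right_mono) auto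
  also have "\<dots> = 4 ^ ?n * sqrt (2 * pi) * (exp ((a L + 1)^2 / 2 + real ?n * ln (R L) - b^2 / (2 - c / D L))
              + exp ((a L + 1)^2 / 2 + real ?n * ln (R L) - eta^2 * (a L * D L) / 2))"
    unfolding e1_def e2_def by (simp add: exp_add[symmetric] exp_diff algebra_simps)
  also have "\<dots> \<le> 4 ^ ?n * sqrt (2 * pi) * (exp (- G) + exp (- G))"
    using pe qe by (intro mult_left_mono add_mono) auto
  also have "\<dots> = 2 * 4 ^ ?n * sqrt (2 * pi) * exp (- G)" by simp
  finally show ?thesis .
qed

end

lemma maxE_aux: "1 \<le> (a::real) \<Longrightarrow> m + \<bar>s\<bar> + 1 \<le> a \<Longrightarrow> m < a - s / a"
proof -
  assume a: "1 \<le> a" and m: "m + \<bar>s\<bar> + 1 \<le> a"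
  have "s / a \<le> \<bar>s\<bar> / a" using a by (intro divide_right_mono) auto
  also have "\<dots> \<le> \<bar>s\<bar>" using a by (simp add: divide_le_eq mult_le_cancel_left1 order.trans[OF _ mult_right_mono] )
  finally show ?thesis using m by linarith
qed

lemma aux_div: "0 < (c::real) \<Longrightarrow> k / c \<le> X \<Longrightarrow> k \<le> c * X"
  by (simp add: pos_divide_le_eq mult.commute)

lemma aux_l1: "64 \<le> (t::real) \<Longrightarrow> 1 / 2 \<le> t / 128" by linarith
lemma aux_l2: "256 * s \<le> (t::real) \<Longrightarrow> s \<le> t / 256" by linarith

context setting
begin

definition good :: "real \<Rightarrow> real \<Rightarrow> bool" where
  "good s L \<longleftrightarrow> 1 < L \<and> 0 < a L \<and> 0 < D L \<and> c \<le> D L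
     \<and> max (max 3 (2 * real CARD('d) + 1)) (max (s + 1) (Max ({}::real set) + \<bar>s\<bar> + 1)) \<le> a L
     \<and> max (393216 / c^2) (128 / c) \<le> a L / D L
     \<and> max (64 / c) (256 * s / c) \<le> (a L)^2 / D L
     \<and> (tau L)^2 \<le> 1 / (a L * D L)
     \<and> real CARD('d) * ln (R L) \<le> c * ((a L)^2 / D L) / 128
     \<and> L ^ CARD('d) \<le> sqrt (2 * pi) * exp ((a L + 1)^2 / 2)"

lemma good_ev: "eventually (good s) at_top"
proof -
  have n0: "0 < real CARD('d)" by simp
  have e: "0 < c / (128 * real CARD('d))" using cpos by simp
  have Kp: "0 < max (393216 / c^2) (128 / c)" using cpos by (simp add: less_max_iff_disj)
  have "eventually (\<lambda>L. ln (R L) \<le> c / (128 * real CARD('d)) * ((a L)^2 / D L)) at_top"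
    by (rule lnR_ev[OF e])
  moreover have "eventually (\<lambda>L::real. 1 < L) at_top" by (rule eventually_gt_at_top)
  ultimately show ?thesis
    using a_pos_ev D_pos_ev D_ge_c_ev
      a_ge_ev[of "max (max 3 (2 * real CARD('d) + 1)) (max (s + 1) (Max ({}::real set) + \<bar>s\<bar> + 1))"]
      Y_ge_ev[OF Kp] X_ge_ev[of "max (64 / c) (256 * s / c)"] tau_ev Ln_ev
  proof eventually_elim
    case (elim L)
    have "real CARD('d) * ln (R L) \<le> real CARD('d) * (c / (128 * real CARD('d)) * ((a L)^2 / D L))"
      using elim(1) n0 by (intro mult_left_mono) auto
    also have "\<dots> = c * ((a L)^2 / D L) / 128" using n0 by (simp add: field_simps)
    finally show ?case unfolding good_def using elim by auto
  qed
qed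

lemma good_basic:
  assumes g: "good s L"
  shows "1 < L" "0 < a L" "0 < D L" "c \<le> D L" "3 \<le> a L" "2 * real CARD('d) + 1 \<le> a L" "s < a L"
    "Max ({}::real set) < a L - s / a L" "393216 / c^2 \<le> a L / D L"
    "a L \<le> c * ((a L)^2 / D L) / 128" "1 / 2 \<le> c * ((a L)^2 / D L) / 128"
    "s \<le> c * ((a L)^2 / D L) / 256" "c * ((a L)^2 / D L) \<le> (a L)^2"
    "(tau L)^2 \<le> 1 / (a L * D L)" "real CARD('d) * ln (R L) \<le> c * ((a L)^2 / D L) / 128"
    "L ^ CARD('d) \<le> sqrt (2 * pi) * exp ((a L + 1)^2 / 2)"
proof -
  note g' = g[unfolded good_def]
  have n1: "1 \<le> real CARD('d)" by simp
  have "2 * real CARD('d) + 1 \<le> a L" using g' by auto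
  then show "3 \<le> a L" using n1 by linarith
  show "1 < L" "0 < a L" "0 < D L" "c \<le> D L" "2 * real CARD('d) + 1 \<le> a L" "s < a L"
    "393216 / c^2 \<le> a L / D L" "(tau L)^2 \<le> 1 / (a L * D L)"
    "real CARD('d) * ln (R L) \<le> c * ((a L)^2 / D L) / 128"
    "L ^ CARD('d) \<le> sqrt (2 * pi) * exp ((a L + 1)^2 / 2)"
    using g' by auto
  show "Max ({}::real set) < a L - s / a L" using g' by (intro maxE_aux) auto
  have aD: "0 < a L" "0 < D L" using g' by auto
  have Y: "128 / c \<le> a L / D L" using g' by auto
  then have "128 * D L \<le> c * a L" using aD cpos by (simp add: field_simps)
  then have "a L * (128 * D L) \<le> a L * (c * a L)" using aD by (intro mult_left_mono) auto
  then show "a L \<le> c * ((a L)^2 / D L) / 128" using aD by (simp add: field_simps power2_eq_square)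
  have X: "64 / c \<le> (a L)^2 / D L" "256 * s / c \<le> (a L)^2 / D L" using g' by auto
  have "64 \<le> c * ((a L)^2 / D L)" by (rule aux_div[OF cpos X(1)])
  then show "1 / 2 \<le> c * ((a L)^2 / D L) / 128" by (rule aux_l1)
  have "256 * s \<le> c * ((a L)^2 / D L)" by (rule aux_div[OF cpos X(2)])
  then show "s \<le> c * ((a L)^2 / D L) / 256" by (rule aux_l2)
  have "c * ((a L)^2 / D L) = (c / D L) * (a L)^2" by simp
  also have "\<dots> \<le> 1 * (a L)^2" using g' by (intro mult_right_mono) auto
  finally show "c * ((a L)^2 / D L) \<le> (a L)^2" by simp
qed

end

lemma theta_aux: "0 < (a::real) \<Longrightarrow> - s \<le> a * (x - k) \<Longrightarrow> k - s / a \<le> x"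
proof -
  assume a: "0 < a" and h: "- s \<le> a * (x - k)"
  have e: "a * (k - s / a) = a * k - s" using a by (simp add: field_simps)
  have "a * (k - s / a) \<le> a * x" unfolding e using h by (simp add: algebra_simps)
  then show ?thesis using a by (rule mult_left_le_imp_le)
qed

lemma sa_aux: "0 < (a::real) \<Longrightarrow> s \<le> t / 256 \<Longrightarrow> t \<le> a^2 \<Longrightarrow> s / a \<le> a / 256"
proof -
  assume a: "0 < a" and s: "s \<le> t / 256" and t: "t \<le> a^2"
  have "s \<le> a * (a / 256)" using s t by (simp add: power2_eq_square)
  then show ?thesis using a by (simp add: divide_le_eq mult.commute)
qed

lemma eta_aux: "0 < (D::real) \<Longrightarrow> 0 < a \<Longrightarrow> c \<le> D \<Longrightarrow> 0 < c \<Longrightarrow> (c / 256) * (a / D) \<le> a / 256"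
proof -
  assume D: "0 < D" and a: "0 < a" and cD: "c \<le> D" and c: "0 < c"
  have "c / D \<le> 1" using cD D by simp
  then have "(c / D) * a \<le> 1 * a" using a by (intro mult_right_mono) auto
  then show ?thesis by simp
qed

lemma aeta_aux: "0 < (D::real) \<Longrightarrow> a * ((c / 256) * (a / D)) = c * (a^2 / D) / 256"
  by (simp add: power2_eq_square field_simps)

lemma aeta_aux2: "0 < (D::real) \<Longrightarrow> a * ((c / 128) * (a / D)) = c * (a^2 / D) / 128"
  by (simp add: power2_eq_square field_simps)

lemma s_over_aux: "0 < (a::real) \<Longrightarrow> 0 < D \<Longrightarrow> s \<le> c * (a^2 / D) / 256 \<Longrightarrow> s / a \<le> (c / 256) * (a / D)"
proof -
  assume a: "0 < a" and D: "0 < D" and s: "s \<le> c * (a^2 / D) / 256"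
  have "c * (a^2 / D) / 256 = a * ((c / 256) * (a / D))" by (simp add: power2_eq_square field_simps)
  then have "s \<le> a * ((c / 256) * (a / D))" using s by simp
  then show ?thesis using a by (simp add: divide_le_eq mult.commute)
qed

context setting
begin

abbreviation XX where "XX L \<equiv> (a L)^2 / D L"

lemma part2a_L:
  assumes g: "good s L"
  shows "(L / R L) ^ CARD('d) * measure M (Aev M (Qbox (R L) z) (Theta (a L) (a L) (xi L)) s)
         \<le> (2 * 4 ^ CARD('d) * sqrt (2 * pi)) * exp (- (c * XX L / 32))"
proof (cases "R L < 1")
  case True
  have "Aev M (Qbox (R L) z) (Theta (a L) (a L) (xi L)) s = {}"
    using Qbox_small[OF True, of z] unfolding Aev_def by auto
  then show ?thesis by simp
next
  case False
  note gb = good_basic[OF g]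
  define b where "b = a L - s / a L"
  define eta where "eta = (c / 256) * (a L / D L)"
  have sa: "s / a L \<le> a L / 256" by (rule sa_aux[OF gb(2) gb(12) gb(13)])
  have ba: "a L / 2 \<le> b" unfolding b_def using sa gb(2) by linarith
  have b0: "0 \<le> b" using ba gb(2) by linarith
  have eta0: "0 \<le> eta" unfolding eta_def using gb(2,3) cpos by simp
  have cX0: "0 \<le> c * XX L" using cpos gb(3) by simp
  have h1: "a L * (s / a L) \<le> c * XX L / 128" using gb(2) gb(12) cX0 by simp
  have pe: "(a L + 1)^2 / 2 + real CARD('d) * ln (R L) - b^2 / (2 - c / D L) \<le> - (c * XX L / 32)"
    by (rule pair_exp[OF gb(2) gb(4) cpos b_def ba h1 gb(10) gb(11) gb(15)])
  have qe: "(a L + 1)^2 / 2 + real CARD('d) * ln (R L) - eta^2 * (a L * D L) / 2 \<le> - (c * XX L / 32)"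
    unfolding eta_def by (rule phi_exp[OF gb(5) gb(4) cpos gb(9) gb(15)])
  have E: "Aev M (Qbox (R L) z) (Theta (a L) (a L) (xi L)) s \<subseteq>
      (\<Union>p\<in>{p\<in>Qbox (R L) z \<times> Qbox (R L) z. fst p \<noteq> snd p}. {\<omega>\<in>space M. 2 * b \<le> xi L (fst p) \<omega> + xi L (snd p) \<omega>})
      \<union> (\<Union>y\<in>Qbox (R L) z. {\<omega>\<in>space M. eta \<le> PhiF (xi L) (v L) (phi L) (r L) y \<omega>})"
  proof
    fix \<omega> assume "\<omega> \<in> Aev M (Qbox (R L) z) (Theta (a L) (a L) (xi L)) s"
    then obtain x y where w: "\<omega> \<in> space M" and xy: "x \<in> Qbox (R L) z" "y \<in> Qbox (R L) z" "x \<noteq> y"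
      and tx: "- s \<le> a L * (xi L x \<omega> - a L)" and ty: "- s \<le> a L * (xi L y \<omega> - a L)"
      unfolding Aev_def Theta_def by blast
    have "b \<le> xi L x \<omega>" unfolding b_def by (rule theta_aux[OF gb(2) tx])
    moreover have "b \<le> xi L y \<omega>" unfolding b_def by (rule theta_aux[OF gb(2) ty])
    ultimately have "2 * b \<le> xi L (fst (x, y)) \<omega> + xi L (snd (x, y)) \<omega>" by simp
    show "\<omega> \<in> (\<Union>p\<in>{p\<in>Qbox (R L) z \<times> Qbox (R L) z. fst p \<noteq> snd p}. {\<omega>\<in>space M. 2 * b \<le> xi L (fst p) \<omega> + xi L (snd p) \<omega>})
      \<union> (\<Union>y\<in>Qbox (R L) z. {\<omega>\<in>space M. eta \<le> PhiF (xi L) (v L) (phi L) (r L) y \<omega>})"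
    proof (rule UnI1)
      have "(x, y) \<in> {p\<in>Qbox (R L) z \<times> Qbox (R L) z. fst p \<noteq> snd p}" using xy by simp
      moreover have "\<omega> \<in> {\<omega>\<in>space M. 2 * b \<le> xi L (fst (x, y)) \<omega> + xi L (snd (x, y)) \<omega>}"
        using w \<open>2 * b \<le> xi L (fst (x, y)) \<omega> + xi L (snd (x, y)) \<omega>\<close> by simp
      ultimately show "\<omega> \<in> (\<Union>p\<in>{p\<in>Qbox (R L) z \<times> Qbox (R L) z. fst p \<noteq> snd p}. {\<omega>\<in>space M. 2 * b \<le> xi L (fst p) \<omega> + xi L (snd p) \<omega>})"
        by (rule UN_I)
    qed
  qed
  show ?thesis
    by (rule main_bound[OF gb(1) _ gb(2) gb(4) b0 eta0 gb(14) gb(16) pe qe E]) (use False in simp)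
qed

end

lemma sqrt_aux: "0 < (a::real) \<Longrightarrow> a - s / a \<le> a * sqrt (1 + t^2) - s / a"
proof -
  assume a: "0 < a"
  have "a * 1 \<le> a * sqrt (1 + t^2)" using a by (intro mult_left_mono) auto
  then show ?thesis by simp
qed

lemma argmax_single: "arg_max_on (f :: 'b \<Rightarrow> real) {z} = z"
  using argmax_prop[of "{z}" f] by simp

context setting
begin

lemma part2b_L:
  assumes g: "good s L"
  shows "(L / R L) ^ CARD('d) * measure M (Aev M (Qbox (R L) z)
              (Theta (a L) (a L * sqrt (1 + (tau L)^2)) (XiF (xi L) (v L) (phi L) (r L))) s)
         \<le> (2 * 4 ^ CARD('d) * sqrt (2 * pi)) * exp (- (c * XX L / 32))"
proof (cases "R L < 1")
  case True
  have "Aev M (Qbox (R L) z) (Theta (a L) (a L * sqrt (1 + (tau L)^2)) (XiF (xi L) (v L) (phi L) (r L))) s = {}"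
    using Qbox_small[OF True, of z] unfolding Aev_def by auto
  then show ?thesis by simp
next
  case False
  note gb = good_basic[OF g]
  define eta where "eta = (c / 256) * (a L / D L)"
  define b where "b = a L - (s / a L + eta)"
  have sa: "s / a L \<le> a L / 256" by (rule sa_aux[OF gb(2) gb(12) gb(13)])
  have ea: "eta \<le> a L / 256" unfolding eta_def by (rule eta_aux[OF gb(3) gb(2) gb(4) cpos])
  have ba: "a L / 2 \<le> b" unfolding b_def using sa ea gb(2) by linarith
  have b0: "0 \<le> b" using ba gb(2) by linarith
  have eta0: "0 \<le> eta" unfolding eta_def using gb(2,3) cpos by simp
  have h1: "a L * (s / a L + eta) \<le> c * XX L / 128"
  proof -
    have "a L * (s / a L + eta) = s + c * XX L / 256"
      using gb(2) aeta_aux[OF gb(3), of "a L" c] unfolding eta_def by (simp add: distrib_left)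
    then show ?thesis using gb(12) by simp
  qed
  have pe: "(a L + 1)^2 / 2 + real CARD('d) * ln (R L) - b^2 / (2 - c / D L) \<le> - (c * XX L / 32)"
    by (rule pair_exp[OF gb(2) gb(4) cpos b_def ba h1 gb(10) gb(11) gb(15)])
  have qe: "(a L + 1)^2 / 2 + real CARD('d) * ln (R L) - eta^2 * (a L * D L) / 2 \<le> - (c * XX L / 32)"
    unfolding eta_def by (rule phi_exp[OF gb(5) gb(4) cpos gb(9) gb(15)])
  let ?U1 = "(\<Union>p\<in>{p\<in>Qbox (R L) z \<times> Qbox (R L) z. fst p \<noteq> snd p}. {\<omega>\<in>space M. 2 * b \<le> xi L (fst p) \<omega> + xi L (snd p) \<omega>})"
  let ?U2 = "(\<Union>y\<in>Qbox (R L) z. {\<omega>\<in>space M. eta \<le> PhiF (xi L) (v L) (phi L) (r L) y \<omega>})"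
  have E: "Aev M (Qbox (R L) z) (Theta (a L) (a L * sqrt (1 + (tau L)^2)) (XiF (xi L) (v L) (phi L) (r L))) s \<subseteq> ?U1 \<union> ?U2"
  proof
    fix \<omega> assume "\<omega> \<in> Aev M (Qbox (R L) z) (Theta (a L) (a L * sqrt (1 + (tau L)^2)) (XiF (xi L) (v L) (phi L) (r L))) s"
    then obtain x y where w: "\<omega> \<in> space M" and xy: "x \<in> Qbox (R L) z" "y \<in> Qbox (R L) z" "x \<noteq> y"
      and tx: "- s \<le> a L * (XiF (xi L) (v L) (phi L) (r L) x \<omega> - a L * sqrt (1 + (tau L)^2))"
      and ty: "- s \<le> a L * (XiF (xi L) (v L) (phi L) (r L) y \<omega> - a L * sqrt (1 + (tau L)^2))"
      unfolding Aev_def Theta_def by blast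
    have u: "a L - s / a L \<le> a L * sqrt (1 + (tau L)^2) - s / a L" by (rule sqrt_aux[OF gb(2)])
    have Xx: "a L - s / a L \<le> xi L x \<omega> + PhiF (xi L) (v L) (phi L) (r L) x \<omega>"
      using theta_aux[OF gb(2) tx] u unfolding XiF_def by linarith
    have Xy: "a L - s / a L \<le> xi L y \<omega> + PhiF (xi L) (v L) (phi L) (r L) y \<omega>"
      using theta_aux[OF gb(2) ty] u unfolding XiF_def by linarith
    show "\<omega> \<in> ?U1 \<union> ?U2"
    proof (cases "eta \<le> PhiF (xi L) (v L) (phi L) (r L) x \<omega>")
      case True
      then have "\<omega> \<in> {\<omega>\<in>space M. eta \<le> PhiF (xi L) (v L) (phi L) (r L) x \<omega>}" using w by simp
      then have "\<omega> \<in> ?U2" using xy(1) by (rule UN_I[rotated])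
      then show ?thesis by (rule UnI2)
    next
      case Fx: False
      show ?thesis
      proof (cases "eta \<le> PhiF (xi L) (v L) (phi L) (r L) y \<omega>")
        case True
        then have "\<omega> \<in> {\<omega>\<in>space M. eta \<le> PhiF (xi L) (v L) (phi L) (r L) y \<omega>}" using w by simp
        then have "\<omega> \<in> ?U2" using xy(2) by (rule UN_I[rotated])
        then show ?thesis by (rule UnI2)
      next
        case Fy: False
        have "2 * b \<le> xi L (fst (x, y)) \<omega> + xi L (snd (x, y)) \<omega>"
          using Xx Xy Fx Fy unfolding b_def by simp
        then have "\<omega> \<in> {\<omega>\<in>space M. 2 * b \<le> xi L (fst (x, y)) \<omega> + xi L (snd (x, y)) \<omega>}" using w by simp
        moreover have "(x, y) \<in> {p\<in>Qbox (R L) z \<times> Qbox (R L) z. fst p \<noteq> snd p}" using xy by simp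
        ultimately have "\<omega> \<in> ?U1" by (rule UN_I[rotated])
        then show ?thesis by (rule UnI1)
      qed
    qed
  qed
  show ?thesis
    by (rule main_bound[OF gb(1) _ gb(2) gb(4) b0 eta0 gb(14) gb(16) pe qe E]) (use False in simp)
qed

lemma part3_L:
  assumes g: "good s L"
  shows "(L / R L) ^ CARD('d) * measure M
          {\<omega>\<in>space M.
             a L * sqrt (1 + (tau L)^2) - s / a L
               \<le> Max ((\<lambda>x. XiF (xi L) (v L) (phi L) (r L) x \<omega>) ` Qbox (R L) z)
           \<and> arg_max_on (\<lambda>x. xi L x \<omega>) (Qbox (R L) z)
               \<noteq> arg_max_on (\<lambda>x. XiF (xi L) (v L) (phi L) (r L) x \<omega>) (Qbox (R L) z)}
         \<le> (2 * 4 ^ CARD('d) * sqrt (2 * pi)) * exp (- (c * XX L / 32))"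
proof -
  note gb = good_basic[OF g]
  let ?Q = "Qbox (R L) z"
  let ?u = "a L * sqrt (1 + (tau L)^2) - s / a L"
  let ?E = "{\<omega>\<in>space M. ?u \<le> Max ((\<lambda>x. XiF (xi L) (v L) (phi L) (r L) x \<omega>) ` ?Q)
           \<and> arg_max_on (\<lambda>x. xi L x \<omega>) ?Q \<noteq> arg_max_on (\<lambda>x. XiF (xi L) (v L) (phi L) (r L) x \<omega>) ?Q}"
  have u: "a L - s / a L \<le> ?u" by (rule sqrt_aux[OF gb(2)])
  have ne: "?Q \<noteq> {}" if "\<omega> \<in> ?E" for \<omega>
  proof
    assume "?Q = {}"
    then have "?u \<le> Max ({}::real set)" using that by simp
    then show False using u gb(8) by linarith
  qed
  show ?thesis
  proof (cases "R L < 1")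
    case True
    have Eempty: "?E = {}"
    proof (rule equals0I)
      fix \<omega> assume w: "\<omega> \<in> ?E"
      have "?Q = {z}" using Qbox_small[OF True, of z] ne[OF w] by blast
      then show False using w by (simp add: argmax_single)
    qed
    show ?thesis unfolding Eempty by simp
  next
    case False
    define eta where "eta = (c / 256) * (a L / D L)"
    define beta where "beta = (c / 128) * (a L / D L)"
    define b where "b = a L - beta"
    have be: "beta = 2 * eta" unfolding beta_def eta_def by simp
    have ea: "eta \<le> a L / 256" unfolding eta_def by (rule eta_aux[OF gb(3) gb(2) gb(4) cpos])
    have ba: "a L / 2 \<le> b" unfolding b_def using be ea gb(2) by linarith
    have b0: "0 \<le> b" using ba gb(2) by linarith
    have eta0: "0 \<le> eta" unfolding eta_def using gb(2,3) cpos by simp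
    have h1: "a L * beta \<le> c * XX L / 128" unfolding beta_def using aeta_aux2[OF gb(3)] by simp
    have se: "s / a L \<le> eta" unfolding eta_def by (rule s_over_aux[OF gb(2) gb(3) gb(12)])
    have pe: "(a L + 1)^2 / 2 + real CARD('d) * ln (R L) - b^2 / (2 - c / D L) \<le> - (c * XX L / 32)"
      by (rule pair_exp[OF gb(2) gb(4) cpos b_def ba h1 gb(10) gb(11) gb(15)])
    have qe: "(a L + 1)^2 / 2 + real CARD('d) * ln (R L) - eta^2 * (a L * D L) / 2 \<le> - (c * XX L / 32)"
      unfolding eta_def by (rule phi_exp[OF gb(5) gb(4) cpos gb(9) gb(15)])
    let ?U1 = "(\<Union>p\<in>{p\<in>?Q \<times> ?Q. fst p \<noteq> snd p}. {\<omega>\<in>space M. 2 * b \<le> xi L (fst p) \<omega> + xi L (snd p) \<omega>})"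
    let ?U2 = "(\<Union>y\<in>?Q. {\<omega>\<in>space M. eta \<le> PhiF (xi L) (v L) (phi L) (r L) y \<omega>})"
    have E: "?E \<subseteq> ?U1 \<union> ?U2"
    proof
      fix \<omega> assume w: "\<omega> \<in> ?E"
      have wM: "\<omega> \<in> space M" and uM: "?u \<le> Max ((\<lambda>x. XiF (xi L) (v L) (phi L) (r L) x \<omega>) ` ?Q)"
        and ax: "arg_max_on (\<lambda>x. xi L x \<omega>) ?Q \<noteq> arg_max_on (\<lambda>x. XiF (xi L) (v L) (phi L) (r L) x \<omega>) ?Q"
        using w by auto
      have fQ: "finite ?Q" by (rule finite_Qbox)
      have nQ: "?Q \<noteq> {}" by (rule ne[OF w])
      define x where "x = arg_max_on (\<lambda>x. xi L x \<omega>) ?Q"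
      define y where "y = arg_max_on (\<lambda>x. XiF (xi L) (v L) (phi L) (r L) x \<omega>) ?Q"
      have xp: "x \<in> ?Q \<and> (\<forall>w\<in>?Q. xi L w \<omega> \<le> xi L x \<omega>)" unfolding x_def by (rule argmax_prop[OF fQ nQ])
      have yp: "y \<in> ?Q \<and> (\<forall>w\<in>?Q. XiF (xi L) (v L) (phi L) (r L) w \<omega> \<le> XiF (xi L) (v L) (phi L) (r L) y \<omega>)"
        unfolding y_def by (rule argmax_prop[OF fQ nQ])
      have xy: "x \<noteq> y" using ax unfolding x_def y_def .
      have "Max ((\<lambda>x. XiF (xi L) (v L) (phi L) (r L) x \<omega>) ` ?Q) \<le> XiF (xi L) (v L) (phi L) (r L) y \<omega>"
        using yp fQ nQ by (subst Max_le_iff) auto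
      then have uy: "?u \<le> xi L y \<omega> + PhiF (xi L) (v L) (phi L) (r L) y \<omega>"
        using uM unfolding XiF_def by linarith
      show "\<omega> \<in> ?U1 \<union> ?U2"
      proof (cases "b \<le> xi L y \<omega>")
        case True
        have "xi L y \<omega> \<le> xi L x \<omega>" using xp yp by blast
        then have "2 * b \<le> xi L (fst (x, y)) \<omega> + xi L (snd (x, y)) \<omega>" using True by simp
        then have "\<omega> \<in> {\<omega>\<in>space M. 2 * b \<le> xi L (fst (x, y)) \<omega> + xi L (snd (x, y)) \<omega>}" using wM by simp
        moreover have "(x, y) \<in> {p\<in>?Q \<times> ?Q. fst p \<noteq> snd p}" using xp yp xy by simp
        ultimately have "\<omega> \<in> ?U1" by (rule UN_I[rotated])
        then show ?thesis by (rule UnI1)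
      next
        case False
        have "eta \<le> PhiF (xi L) (v L) (phi L) (r L) y \<omega>"
          using False uy u se be unfolding b_def by linarith
        then have "\<omega> \<in> {\<omega>\<in>space M. eta \<le> PhiF (xi L) (v L) (phi L) (r L) y \<omega>}" using wM by simp
        then have "\<omega> \<in> ?U2" using yp by (intro UN_I[rotated]) auto
        then show ?thesis by (rule UnI2)
      qed
    qed
    show ?thesis
      by (rule main_bound[OF gb(1) _ gb(2) gb(4) b0 eta0 gb(14) gb(16) pe qe E]) (use False in simp)
  qed
qed

end

lemma aux_l3: "- 32 * Z \<le> (t::real) \<Longrightarrow> - (t / 32) \<le> Z" by linarith

context setting
begin

lemma XX_lim: "filterlim XX at_top at_top"
  unfolding filterlim_at_top using X_ge_ev by blast

lemma bound_lim: "((\<lambda>L. (2 * 4 ^ CARD('d) * sqrt (2 * pi)) * exp (- (c * XX L / 32))) \<longlongrightarrow> 0) at_top"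
proof -
  have "filterlim (\<lambda>L. - (c * XX L / 32)) at_bot at_top"
    unfolding filterlim_at_bot
  proof
    fix Z :: real
    show "eventually (\<lambda>L. - (c * XX L / 32) \<le> Z) at_top"
      using X_ge_ev[of "- 32 * Z / c"]
    proof eventually_elim
      case (elim L)
      then have "(- 32 * Z) / c \<le> XX L" by simp
      then have "- 32 * Z \<le> c * XX L" by (rule aux_div[OF cpos])
      then show ?case by (rule aux_l3)
    qed
  qed
  then have "((\<lambda>L. exp (- (c * XX L / 32))) \<longlongrightarrow> 0) at_top"
    by (rule filterlim_compose[OF exp_at_bot])
  then show ?thesis by (rule tendsto_mult_right_zero)
qed

lemma lim_generic:
  assumes "eventually (\<lambda>L. 0 \<le> f L \<and> f L \<le> (2 * 4 ^ CARD('d) * sqrt (2 * pi)) * exp (- (c * XX L / 32))) at_top"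
  shows "(f \<longlongrightarrow> 0) at_top"
proof (rule tendsto_sandwich[OF _ _ tendsto_const bound_lim])
  show "eventually (\<lambda>L. 0 \<le> f L) at_top" using assms by (rule eventually_mono) auto
  show "eventually (\<lambda>L. f L \<le> (2 * 4 ^ CARD('d) * sqrt (2 * pi)) * exp (- (c * XX L / 32))) at_top"
    using assms by (rule eventually_mono) auto
qed

lemma nonneg_generic:
  assumes L: "1 < L" and E: "R L < 1 \<Longrightarrow> E = {}"
  shows "0 \<le> (L / R L) ^ CARD('d) * measure M E"
proof (cases "R L < 1")
  case True then show ?thesis using E by simp
next
  case False then show ?thesis using L by simp
qed

lemma part1: "\<forall>s::real. \<exists>L0\<ge>1. \<forall>L\<ge>L0. \<forall>z::int ^ 'd.
       {\<omega>\<in>space M.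
          a L * sqrt (1 + (tauF M (xi L) (v L) (phi L) (r L))^2) - s / a L
            \<le> Max ((\<lambda>x. XiF (xi L) (v L) (phi L) (r L) x \<omega>) ` Qbox (R L) z)
        \<and> Max ((\<lambda>x. xi L x \<omega>) ` Qbox (R L + r L) z) \<le> a L - (2 * real CARD('d) + 1)} = {}"
proof
  fix s :: real
  obtain N where N: "\<forall>L\<ge>N. good s L" using good_ev[of s] unfolding eventually_at_top_linorder by blast
  show "\<exists>L0\<ge>1. \<forall>L\<ge>L0. \<forall>z::int ^ 'd.
       {\<omega>\<in>space M.
          a L * sqrt (1 + (tauF M (xi L) (v L) (phi L) (r L))^2) - s / a L
            \<le> Max ((\<lambda>x. XiF (xi L) (v L) (phi L) (r L) x \<omega>) ` Qbox (R L) z)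
        \<and> Max ((\<lambda>x. xi L x \<omega>) ` Qbox (R L + r L) z) \<le> a L - (2 * real CARD('d) + 1)} = {}"
  proof (intro exI[of _ "max N 1"] conjI allI impI)
    show "1 \<le> max N 1" by simp
    fix L z assume "max N 1 \<le> L"
    then have g: "good s L" using N by simp
    note gb = good_basic[OF g]
    show "{\<omega>\<in>space M.
          a L * sqrt (1 + (tauF M (xi L) (v L) (phi L) (r L))^2) - s / a L
            \<le> Max ((\<lambda>x. XiF (xi L) (v L) (phi L) (r L) x \<omega>) ` Qbox (R L) z)
        \<and> Max ((\<lambda>x. xi L x \<omega>) ` Qbox (R L + r L) z) \<le> a L - (2 * real CARD('d) + 1)} = {}"
      by (rule part1_L[OF gb(1) gb(2) gb(6) gb(7) gb(8)])
  qed
qed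

lemma part2: "\<forall>(z::int ^ 'd) (s::real).
       ((\<lambda>L. (L / R L) ^ CARD('d) * measure M (Aev M (Qbox (R L) z) (Theta (a L) (a L) (xi L)) s))
          \<longlongrightarrow> 0) at_top
     \<and> ((\<lambda>L. (L / R L) ^ CARD('d) * measure M (Aev M (Qbox (R L) z)
              (Theta (a L) (a L * sqrt (1 + (tauF M (xi L) (v L) (phi L) (r L))^2))
                 (XiF (xi L) (v L) (phi L) (r L))) s))
          \<longlongrightarrow> 0) at_top"
proof (intro allI conjI)
  fix z :: "int^'d" and s :: real
  show "((\<lambda>L. (L / R L) ^ CARD('d) * measure M (Aev M (Qbox (R L) z) (Theta (a L) (a L) (xi L)) s))
          \<longlongrightarrow> 0) at_top"
  proof (rule lim_generic)
    show "eventually (\<lambda>L. 0 \<le> (L / R L) ^ CARD('d) * measure M (Aev M (Qbox (R L) z) (Theta (a L) (a L) (xi L)) s)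
        \<and> (L / R L) ^ CARD('d) * measure M (Aev M (Qbox (R L) z) (Theta (a L) (a L) (xi L)) s)
           \<le> (2 * 4 ^ CARD('d) * sqrt (2 * pi)) * exp (- (c * XX L / 32))) at_top"
      using good_ev[of s]
    proof eventually_elim
      case (elim L)
      have "R L < 1 \<Longrightarrow> Aev M (Qbox (R L) z) (Theta (a L) (a L) (xi L)) s = {}"
        using Qbox_small[of "R L" z] unfolding Aev_def by auto
      then show ?case using nonneg_generic[OF good_basic(1)[OF elim]] part2a_L[OF elim] by blast
    qed
  qed
  show "((\<lambda>L. (L / R L) ^ CARD('d) * measure M (Aev M (Qbox (R L) z)
              (Theta (a L) (a L * sqrt (1 + (tauF M (xi L) (v L) (phi L) (r L))^2))
                 (XiF (xi L) (v L) (phi L) (r L))) s))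
          \<longlongrightarrow> 0) at_top"
  proof (rule lim_generic)
    show "eventually (\<lambda>L. 0 \<le> (L / R L) ^ CARD('d) * measure M (Aev M (Qbox (R L) z)
              (Theta (a L) (a L * sqrt (1 + (tauF M (xi L) (v L) (phi L) (r L))^2))
                 (XiF (xi L) (v L) (phi L) (r L))) s)
        \<and> (L / R L) ^ CARD('d) * measure M (Aev M (Qbox (R L) z)
              (Theta (a L) (a L * sqrt (1 + (tauF M (xi L) (v L) (phi L) (r L))^2))
                 (XiF (xi L) (v L) (phi L) (r L))) s)
           \<le> (2 * 4 ^ CARD('d) * sqrt (2 * pi)) * exp (- (c * XX L / 32))) at_top"
      using good_ev[of s]
    proof eventually_elim
      case (elim L)
      have "R L < 1 \<Longrightarrow> Aev M (Qbox (R L) z)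
              (Theta (a L) (a L * sqrt (1 + (tauF M (xi L) (v L) (phi L) (r L))^2))
                 (XiF (xi L) (v L) (phi L) (r L))) s = {}"
        using Qbox_small[of "R L" z] unfolding Aev_def by auto
      then show ?case using nonneg_generic[OF good_basic(1)[OF elim]] part2b_L[OF elim] by blast
    qed
  qed
qed

lemma E3_empty:
  assumes g: "good s L" and R: "R L < 1"
  shows "{\<omega>\<in>space M.
             a L * sqrt (1 + (tau L)^2) - s / a L
               \<le> Max ((\<lambda>x. XiF (xi L) (v L) (phi L) (r L) x \<omega>) ` Qbox (R L) z)
           \<and> arg_max_on (\<lambda>x. xi L x \<omega>) (Qbox (R L) z)
               \<noteq> arg_max_on (\<lambda>x. XiF (xi L) (v L) (phi L) (r L) x \<omega>) (Qbox (R L) z)} = {}"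
proof (rule equals0I)
  note gb = good_basic[OF g]
  let ?Q = "Qbox (R L) z"
  let ?u = "a L * sqrt (1 + (tau L)^2) - s / a L"
  have u: "a L - s / a L \<le> ?u" by (rule sqrt_aux[OF gb(2)])
  fix \<omega> assume w: "\<omega> \<in> {\<omega>\<in>space M. ?u \<le> Max ((\<lambda>x. XiF (xi L) (v L) (phi L) (r L) x \<omega>) ` ?Q)
           \<and> arg_max_on (\<lambda>x. xi L x \<omega>) ?Q \<noteq> arg_max_on (\<lambda>x. XiF (xi L) (v L) (phi L) (r L) x \<omega>) ?Q}"
  have ne: "?Q \<noteq> {}"
  proof
    assume "?Q = {}"
    then have "?u \<le> Max ({}::real set)" using w by simp
    then show False using u gb(8) by linarith
  qed
  have "?Q = {z}" using Qbox_small[OF R, of z] ne by blast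
  then show False using w by (simp add: argmax_single)
qed

lemma part3: "\<forall>(z::int ^ 'd) (s::real).
       ((\<lambda>L. (L / R L) ^ CARD('d) * measure M
          {\<omega>\<in>space M.
             a L * sqrt (1 + (tauF M (xi L) (v L) (phi L) (r L))^2) - s / a L
               \<le> Max ((\<lambda>x. XiF (xi L) (v L) (phi L) (r L) x \<omega>) ` Qbox (R L) z)
           \<and> arg_max_on (\<lambda>x. xi L x \<omega>) (Qbox (R L) z)
               \<noteq> arg_max_on (\<lambda>x. XiF (xi L) (v L) (phi L) (r L) x \<omega>) (Qbox (R L) z)})
          \<longlongrightarrow> 0) at_top"
proof (intro allI)
  fix z :: "int^'d" and s :: real
  show "((\<lambda>L. (L / R L) ^ CARD('d) * measure M
          {\<omega>\<in>space M.
             a L * sqrt (1 + (tauF M (xi L) (v L) (phi L) (r L))^2) - s / a L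
               \<le> Max ((\<lambda>x. XiF (xi L) (v L) (phi L) (r L) x \<omega>) ` Qbox (R L) z)
           \<and> arg_max_on (\<lambda>x. xi L x \<omega>) (Qbox (R L) z)
               \<noteq> arg_max_on (\<lambda>x. XiF (xi L) (v L) (phi L) (r L) x \<omega>) (Qbox (R L) z)})
          \<longlongrightarrow> 0) at_top"
  proof (rule lim_generic)
    show "eventually (\<lambda>L. 0 \<le> (L / R L) ^ CARD('d) * measure M
          {\<omega>\<in>space M.
             a L * sqrt (1 + (tauF M (xi L) (v L) (phi L) (r L))^2) - s / a L
               \<le> Max ((\<lambda>x. XiF (xi L) (v L) (phi L) (r L) x \<omega>) ` Qbox (R L) z)
           \<and> arg_max_on (\<lambda>x. xi L x \<omega>) (Qbox (R L) z)
               \<noteq> arg_max_on (\<lambda>x. XiF (xi L) (v L) (phi L) (r L) x \<omega>) (Qbox (R L) z)}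
        \<and> (L / R L) ^ CARD('d) * measure M
          {\<omega>\<in>space M.
             a L * sqrt (1 + (tauF M (xi L) (v L) (phi L) (r L))^2) - s / a L
               \<le> Max ((\<lambda>x. XiF (xi L) (v L) (phi L) (r L) x \<omega>) ` Qbox (R L) z)
           \<and> arg_max_on (\<lambda>x. xi L x \<omega>) (Qbox (R L) z)
               \<noteq> arg_max_on (\<lambda>x. XiF (xi L) (v L) (phi L) (r L) x \<omega>) (Qbox (R L) z)}
           \<le> (2 * 4 ^ CARD('d) * sqrt (2 * pi)) * exp (- (c * XX L / 32))) at_top"
      using good_ev[of s]
    proof eventually_elim
      case (elim L)
      show ?case using nonneg_generic[OF good_basic(1)[OF elim] E3_empty[OF elim]] part3_L[OF elim] by blast
    qed
  qed
qed

end

theorem lemma2p7: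
  fixes M :: "'a measure"
    and xi :: "real \<Rightarrow> int ^ 'd \<Rightarrow> 'a \<Rightarrow> real"
    and v :: "real \<Rightarrow> int ^ 'd \<Rightarrow> real"
    and a R r :: "real \<Rightarrow> real"
    and phi :: "real \<Rightarrow> int ^ 'd \<Rightarrow> real"
  assumes P: "prob_space M"
    and gauss: "\<forall>L\<ge>1. gaussian_field M (xi L) (\<lambda>x y. v L (y - x))"
    and unitvar: "\<forall>L\<ge>1. v L 0 = 1"
    and nonneg: "\<forall>L\<ge>1. \<forall>x. 0 \<le> v L x"
    and condI: "\<forall>\<epsilon>>0. eventually (\<lambda>L. \<forall>x. exp (sqrt (ln L)) \<le> znorm x \<longrightarrow> v L x * ln (znorm x) \<le> \<epsilon>) at_top"
    and condII: "\<exists>c c'. 0 < c \<and> 0 < c' \<and> (\<forall>L\<ge>1. \<forall>x. x \<noteq> 0 \<longrightarrow>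
                   1 - exp (c' * znorm x) / dparam (v L) \<le> v L x \<and> v L x \<le> 1 - c / dparam (v L))"
    and a_def: "\<forall>L>1. measure M {\<omega>\<in>space M. a L < xi L 0 \<omega>} = L powr (- real CARD('d))"
    and R1: "((\<lambda>L. a L / ln (R L)) \<longlongrightarrow> 0) at_top"
    and R2: "((\<lambda>L. ln (R L) / ((a L)^2 / dparam (v L))) \<longlongrightarrow> 0) at_top"
    and r1: "\<forall>L>1. 0 < r L \<and> (0 < a L \<longrightarrow> ln (a L) \<le> ln (r L))"
    and r2: "((\<lambda>L. ln (r L) / sqrt (a L)) \<longlongrightarrow> 0) at_top"
    and phibar: "\<forall>L\<ge>1. principal_eigenfunction (\<lambda>x. a L * (1 - v L x)) (Qbox0 (r L)) (phi L)"
    and stand1: "((\<lambda>L. dparam (v L) / a L) \<longlongrightarrow> 0) at_top"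
    and stand2: "((\<lambda>L. tauF M (xi L) (v L) (phi L) (r L) / ((1 / a L) * sqrt (a L / dparam (v L)))) \<longlongrightarrow> 0) at_top"
  shows
   "(\<forall>s::real. \<exists>L0\<ge>1. \<forall>L\<ge>L0. \<forall>z::int ^ 'd.
       {\<omega>\<in>space M.
          a L * sqrt (1 + (tauF M (xi L) (v L) (phi L) (r L))^2) - s / a L
            \<le> Max ((\<lambda>x. XiF (xi L) (v L) (phi L) (r L) x \<omega>) ` Qbox (R L) z)
        \<and> Max ((\<lambda>x. xi L x \<omega>) ` Qbox (R L + r L) z) \<le> a L - (2 * real CARD('d) + 1)} = {})
  \<and> (\<forall>(z::int ^ 'd) (s::real).
       ((\<lambda>L. (L / R L) ^ CARD('d) * measure M (Aev M (Qbox (R L) z) (Theta (a L) (a L) (xi L)) s))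
          \<longlongrightarrow> 0) at_top
     \<and> ((\<lambda>L. (L / R L) ^ CARD('d) * measure M (Aev M (Qbox (R L) z)
              (Theta (a L) (a L * sqrt (1 + (tauF M (xi L) (v L) (phi L) (r L))^2))
                 (XiF (xi L) (v L) (phi L) (r L))) s))
          \<longlongrightarrow> 0) at_top)
  \<and> (\<forall>(z::int ^ 'd) (s::real).
       ((\<lambda>L. (L / R L) ^ CARD('d) * measure M
          {\<omega>\<in>space M.
             a L * sqrt (1 + (tauF M (xi L) (v L) (phi L) (r L))^2) - s / a L
               \<le> Max ((\<lambda>x. XiF (xi L) (v L) (phi L) (r L) x \<omega>) ` Qbox (R L) z)
           \<and> arg_max_on (\<lambda>x. xi L x \<omega>) (Qbox (R L) z)
               \<noteq> arg_max_on (\<lambda>x. XiF (xi L) (v L) (phi L) (r L) x \<omega>) (Qbox (R L) z)})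
          \<longlongrightarrow> 0) at_top)"
proof -
  obtain c c' where cc: "0 < c" "0 < c'" "\<forall>L\<ge>1. \<forall>x. x \<noteq> 0 \<longrightarrow>
                   1 - exp (c' * znorm x) / dparam (v L) \<le> v L x \<and> v L x \<le> 1 - c / dparam (v L)"
    using condII by blast
  interpret S: setting M xi v a R r phi c c'
    by (rule setting.intro) (fact P gauss unitvar nonneg condI cc a_def R2 r1 phibar stand1 stand2)+
  show ?thesis by (intro conjI S.part1 S.part2 S.part3)
qed

end
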